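(* Let $p:=\frac1{2\sqrt2}$ and $c:=\frac34$, and for $\alpha\in\mathbb R$, $q,C>0$, $n>0$ let $$X_{qC\alpha}(n):=\int_q^{+\infty}d\rho\,\rho^\alpha(1+\rho^2)^ne^{-n\frac{(\rho-q)^2}{C}}.$$ Then for fixed $\alpha\in\mathbb R$ and $n\to+\infty$, $$X_{pc\alpha}(n)=\frac{3\sqrt{\pi/5}}{2^{\alpha/2+1/2}}\,\frac{(3/2)^n}{e^{n/6}\sqrt n}\Big[1+O(\tfrac1n)\Big],\qquad X_{2p,2c,\alpha}(n)=3\sqrt{\pi/7}\,2^{\alpha/2}\,\frac{3^n}{e^{n/3}\sqrt n}\Big[1+O(\tfrac1n)\Big].$$ *)

theory Defs
  imports "HOL-Analysis.Analysis" "HOL-Library.Landau_Symbols"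
begin

definition Xint :: "real \<Rightarrow> real \<Rightarrow> real \<Rightarrow> real \<Rightarrow> real" where
  "Xint q C \<alpha> n = integral {q..}
     (\<lambda>\<rho>. \<rho> powr \<alpha> * (1 + \<rho>\<^sup>2) powr n * exp (- n * (\<rho> - q)\<^sup>2 / C))"

definition p_const :: real where "p_const = 1 / (2 * sqrt 2)"
definition c_const :: real where "c_const = 3 / 4"

end

theory Submission
  imports Defs "HOL-Probability.Distributions" "HOL-Real_Asymp.Real_Asymp"
begin

lemma gauss_int:
  fixes k :: real assumes k: "k > 0"
  shows "integrable lborel (\<lambda>x. exp (- (k * x\<^sup>2)))"
    "(\<integral>x. exp (- (k * x\<^sup>2)) \<partial>lborel) = sqrt (pi / k)"
proof -
  define \<sigma> where "\<sigma> = 1 / sqrt (2 * k)"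
  have s: "\<sigma> > 0" using k by (simp add: \<sigma>_def)
  have s2: "\<sigma>\<^sup>2 = 1 / (2*k)" using k by (simp add: \<sigma>_def power_divide)
  have eq: "exp (- (k * x\<^sup>2)) = sqrt (pi / k) * normal_density 0 \<sigma> x" for x
    using k pi_gt_zero unfolding normal_density_def s2
    by (simp add: field_simps real_sqrt_divide real_sqrt_mult)
  show "integrable lborel (\<lambda>x. exp (- (k * x\<^sup>2)))"
    unfolding eq using s by (intro integrable_mult_right integrable_normal_density) auto
  show "(\<integral>x. exp (- (k * x\<^sup>2)) \<partial>lborel) = sqrt (pi / k)"
    unfolding eq using s by simp
qed

lemma odd_integral_zero:
  fixes f :: "real \<Rightarrow> real"
  assumes "\<And>x. f (-x) = - f x"
  shows "(\<integral>x. f x \<partial>lborel) = 0"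
proof -
  have "(\<integral>x. f x \<partial>lborel) = \<bar>-1\<bar> *\<^sub>R (\<integral>x. f (0 + (-1) * x) \<partial>lborel)"
    by (rule lborel_integral_real_affine) simp
  also have "\<dots> = - (\<integral>x. f x \<partial>lborel)" using assms by simp
  finally show ?thesis by simp
qed


lemma exp_remainder2:
  fixes x :: real shows "\<bar>exp x - 1 - x\<bar> \<le> x\<^sup>2 * exp \<bar>x\<bar>"
proof -
  obtain t where t: "\<bar>t\<bar> \<le> \<bar>x\<bar>" "exp x = (\<Sum>m<2. x ^ m / fact m) + exp t / fact 2 * x ^ 2"
    using Maclaurin_exp_le[of x 2] by blast
  have eq: "exp x - 1 - x = exp t / 2 * x\<^sup>2" using t(2) by (simp add: numeral_2_eq_2)
  have "\<bar>exp x - 1 - x\<bar> = \<bar>exp t / 2 * x\<^sup>2\<bar>" by (simp only: eq)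
  also have "\<dots> = exp t / 2 * x\<^sup>2" by simp
  also have "\<dots> \<le> exp \<bar>x\<bar> * x\<^sup>2"
  proof (intro mult_right_mono)
    have "t \<le> \<bar>x\<bar>" using t(1) by linarith
    then have "exp t \<le> exp \<bar>x\<bar>" by simp
    then show "exp t / 2 \<le> exp \<bar>x\<bar>" using exp_gt_zero[of t] by linarith
  qed simp
  finally show ?thesis by (simp add: mult.commute)
qed

lemma exp_poly_bounds:
  fixes y :: real assumes "0 \<le> y"
  shows "y * exp (-y) \<le> 1" "y\<^sup>2 * exp (-y) \<le> 2" "y ^ 3 * exp (-y) \<le> 6"
proof -
  obtain t where t: "\<bar>t\<bar> \<le> \<bar>y\<bar>" "exp y = (\<Sum>m<4. y ^ m / fact m) + exp t / fact 4 * y ^ 4"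
    using Maclaurin_exp_le[of y 4] by blast
  have e: "exp y = 1 + y + y\<^sup>2/2 + y^3/6 + exp t / 24 * y^4"
    using t(2) by (simp add: eval_nat_numeral fact_numeral)
  have p: "0 \<le> exp t / 24 * y^4" using assms by simp
  have "y \<le> exp y" "y\<^sup>2 \<le> 2 * exp y" "y^3 \<le> 6 * exp y"
    using e p assms by (auto simp: power2_eq_square)
  then show "y * exp (-y) \<le> 1" "y\<^sup>2 * exp (-y) \<le> 2" "y ^ 3 * exp (-y) \<le> 6"
    by (simp_all add: exp_minus field_simps)
qed

lemma tri3:
  fixes x y z :: real shows "\<bar>x + y + z\<bar> \<le> \<bar>x\<bar> + \<bar>y\<bar> + \<bar>z\<bar>"
proof -
  have "\<bar>x + y + z\<bar> \<le> \<bar>x + y\<bar> + \<bar>z\<bar>" by (rule abs_triangle_ineq)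
  also have "\<dots> \<le> \<bar>x\<bar> + \<bar>y\<bar> + \<bar>z\<bar>" by (intro add_right_mono abs_triangle_ineq)
  finally show ?thesis .
qed

lemma tri4:
  fixes x y z u :: real shows "\<bar>x + y + z + u\<bar> \<le> \<bar>x\<bar> + \<bar>y\<bar> + \<bar>z\<bar> + \<bar>u\<bar>"
proof -
  have "\<bar>x + y + z + u\<bar> \<le> \<bar>x + y + z\<bar> + \<bar>u\<bar>" by (rule abs_triangle_ineq)
  also have "\<dots> \<le> \<bar>x\<bar> + \<bar>y\<bar> + \<bar>z\<bar> + \<bar>u\<bar>" by (intro add_right_mono tri3)
  finally show ?thesis .
qed

lemma heart:
  fixes a b c A M Mv \<delta> n t w v :: real
  assumes a: "a > 0" and n: "n \<ge> 1" and t: "\<bar>t\<bar> \<le> \<delta>" and M: "M \<ge> 0" and Mv: "Mv \<ge> 0"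
    and hw: "\<bar>w - b * t^3\<bar> \<le> M * t^4"
    and H3: "\<bar>b\<bar> * \<delta> + M * \<delta>\<^sup>2 \<le> a / 2"
    and hv: "\<bar>v - A - c * t\<bar> \<le> Mv * t\<^sup>2"
  shows "\<bar>v * exp (n * (w - a * t\<^sup>2)) - exp (- (n * a * t\<^sup>2)) * (A + c * t + A * n * b * t^3)\<bar>
    \<le> (4 * Mv / a + 32 * (Mv * a / 2 + \<bar>A\<bar> * M + \<bar>c\<bar> * (\<bar>b\<bar> + M * \<delta>)) / a\<^sup>2
        + 384 * ((\<bar>A\<bar> + \<bar>c\<bar> * \<delta> + Mv * \<delta>\<^sup>2) * (\<bar>b\<bar> + M * \<delta>)\<^sup>2) / a^3) / n
       * exp (- (n * a * t\<^sup>2 / 4))"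
proof -
  define B where "B = \<bar>b\<bar> + M * \<delta>"
  define P where "P = \<bar>A\<bar> + \<bar>c\<bar> * \<delta> + Mv * \<delta>\<^sup>2"
  define Q1 where "Q1 = Mv * a / 2 + \<bar>A\<bar> * M + \<bar>c\<bar> * B"
  define s where "s = v - A - c * t"
  define R where "R = exp (n * w) - 1 - n * w"
  define E where "E = exp (- (n * a * t\<^sup>2))"
  have d0: "\<delta> \<ge> 0" using t by linarith
  have at: "\<bar>t\<bar>^3 = \<bar>t\<bar> * t\<^sup>2" "t^4 = t\<^sup>2 * t\<^sup>2" "\<bar>t\<bar>^4 = t\<^sup>2 * t\<^sup>2"
    by (simp_all add: power2_eq_square power3_eq_cube power4_eq_xxxx)
  have t2: "t\<^sup>2 \<le> \<delta>\<^sup>2" using abs_le_square_iff[of t \<delta>] t d0 by simp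
  have B0: "B \<ge> 0" and P0: "P \<ge> 0" using M Mv d0 by (auto simp: B_def P_def)
  have w1: "\<bar>w\<bar> \<le> \<bar>b\<bar> * \<bar>t\<bar>^3 + M * t^4"
  proof -
    have e1: "\<bar>b * t^3\<bar> = \<bar>b\<bar> * \<bar>t\<bar>^3" by (simp add: abs_mult power_abs)
    have "\<bar>w\<bar> \<le> \<bar>w - b*t^3\<bar> + \<bar>b*t^3\<bar>" using abs_triangle_ineq[of "w - b*t^3" "b*t^3"] by simp
    then show ?thesis using hw e1 by linarith
  qed
  have w2: "\<bar>w\<bar> \<le> B * \<bar>t\<bar>^3"
  proof -
    have t4: "t^4 = \<bar>t\<bar> * \<bar>t\<bar>^3" by (cases "t \<ge> 0") (simp_all add: power4_eq_xxxx power3_eq_cube)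
    have "\<bar>t\<bar> * \<bar>t\<bar>^3 \<le> \<delta> * \<bar>t\<bar>^3" by (rule mult_right_mono[OF t]) simp
    from mult_left_mono[OF this M]
    have "M * t^4 \<le> M * \<delta> * \<bar>t\<bar>^3" unfolding t4 by (simp add: mult.assoc)
    then show ?thesis using w1 by (simp add: B_def algebra_simps)
  qed
  have w3: "\<bar>w\<bar> \<le> a / 2 * t\<^sup>2"
  proof -
    have "\<bar>t\<bar> * t\<^sup>2 \<le> \<delta> * t\<^sup>2" by (rule mult_right_mono[OF t]) simp
    from mult_left_mono[OF this abs_ge_zero[of b]]
    have "\<bar>b\<bar> * \<bar>t\<bar>^3 \<le> \<bar>b\<bar> * \<delta> * t\<^sup>2" unfolding at by (simp add: mult.assoc)
    moreover have "t\<^sup>2 * t\<^sup>2 \<le> \<delta>\<^sup>2 * t\<^sup>2" by (rule mult_right_mono[OF t2]) simp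
    from mult_left_mono[OF this M]
    have "M * t^4 \<le> M * \<delta>\<^sup>2 * t\<^sup>2" unfolding at by (simp add: mult.assoc)
    ultimately have "\<bar>w\<bar> \<le> (\<bar>b\<bar> * \<delta> + M * \<delta>\<^sup>2) * t\<^sup>2" using w1 by (simp add: algebra_simps)
    also have "\<dots> \<le> a / 2 * t\<^sup>2" using H3 by (intro mult_right_mono) auto
    finally show ?thesis .
  qed
  have nw: "\<bar>n * w\<bar> \<le> n * a * t\<^sup>2 / 2"
  proof -
    have "\<bar>n * w\<bar> = n * \<bar>w\<bar>" using n by (simp add: abs_mult)
    also have "\<dots> \<le> n * (a / 2 * t\<^sup>2)" using w3 n by (intro mult_left_mono) auto
    finally show ?thesis by simp
  qed
  have Rb: "\<bar>R\<bar> \<le> n\<^sup>2 * B\<^sup>2 * t^6 * exp (n * a * t\<^sup>2 / 2)"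
  proof -
    have "\<bar>R\<bar> \<le> (n * w)\<^sup>2 * exp \<bar>n * w\<bar>" unfolding R_def by (rule exp_remainder2)
    also have "\<dots> \<le> (n\<^sup>2 * B\<^sup>2 * t^6) * exp (n * a * t\<^sup>2 / 2)"
    proof (intro mult_mono)
      have "w\<^sup>2 \<le> (B * \<bar>t\<bar>^3)\<^sup>2" using power_mono[OF w2 abs_ge_zero, of 2] by simp
      also have "(B * \<bar>t\<bar>^3)\<^sup>2 = B\<^sup>2 * t^6"
        by (simp add: power_mult_distrib power_abs flip: power_mult)
      finally have "w\<^sup>2 \<le> B\<^sup>2 * t^6" .
      from mult_left_mono[OF this zero_le_power2[of n]]
      show "(n * w)\<^sup>2 \<le> n\<^sup>2 * B\<^sup>2 * t^6"
        by (simp add: power_mult_distrib mult.assoc)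
    qed (use nw in auto)
    finally show ?thesis .
  qed
  have vb: "\<bar>v\<bar> \<le> P"
  proof -
    have c1: "\<bar>c * t\<bar> \<le> \<bar>c\<bar> * \<delta>" using mult_left_mono[OF t abs_ge_zero[of c]] by (simp add: abs_mult)
    have c2: "\<bar>v - A - c * t\<bar> \<le> Mv * \<delta>\<^sup>2" using order_trans[OF hv mult_left_mono[OF t2 Mv]] .
    have "\<bar>v\<bar> \<le> \<bar>v - A - c * t\<bar> + \<bar>A\<bar> + \<bar>c * t\<bar>"
      using tri3[of "v - A - c * t" A "c * t"] by simp
    also have "\<dots> \<le> Mv * \<delta>\<^sup>2 + \<bar>A\<bar> + \<bar>c\<bar> * \<delta>"
      by (rule add_mono[OF add_mono[OF c2 order_refl] c1])
    also have "\<dots> = P" by (simp add: P_def algebra_simps)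
    finally show ?thesis .
  qed
  have ident: "v * exp (n * w) - (A + c * t + A * n * b * t^3)
      = s * (1 + n * w) + A * n * (w - b * t^3) + c * t * n * w + v * R"
    by (simp add: s_def R_def algebra_simps)
  have b1: "\<bar>s * (1 + n * w)\<bar> \<le> Mv * t\<^sup>2 + Mv * a / 2 * (n * t^4)"
  proof -
    have h1: "\<bar>1 + n * w\<bar> \<le> 1 + n * a * t\<^sup>2 / 2"
      using order_trans[OF abs_triangle_ineq[of 1 "n * w"] add_left_mono[OF nw, of "\<bar>1\<bar>"]] by simp
    have hs: "\<bar>s\<bar> \<le> Mv * t\<^sup>2" unfolding s_def by (rule hv)
    have "\<bar>s * (1 + n * w)\<bar> \<le> Mv * t\<^sup>2 * (1 + n * a * t\<^sup>2 / 2)"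
      unfolding abs_mult by (rule mult_mono[OF hs h1 mult_nonneg_nonneg[OF Mv zero_le_power2] abs_ge_zero])
    also have "\<dots> = Mv * t\<^sup>2 + Mv * a / 2 * (n * t^4)" by (simp add: algebra_simps power4_eq_xxxx power2_eq_square)
    finally show ?thesis .
  qed
  have b2: "\<bar>A * n * (w - b * t^3)\<bar> \<le> \<bar>A\<bar> * M * (n * t^4)"
  proof -
    have "\<bar>A * n * (w - b * t^3)\<bar> = (\<bar>A\<bar> * n) * \<bar>w - b * t^3\<bar>" using n by (simp add: abs_mult)
    also have "\<dots> \<le> (\<bar>A\<bar> * n) * (M * t^4)" using hw n by (intro mult_left_mono) auto
    finally show ?thesis by (simp add: algebra_simps)
  qed
  have b3: "\<bar>c * t * n * w\<bar> \<le> \<bar>c\<bar> * B * (n * t^4)"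
  proof -
    have "\<bar>c * t * n * w\<bar> = \<bar>c\<bar> * n * (\<bar>t\<bar> * \<bar>w\<bar>)" using n by (simp add: abs_mult)
    also have "\<dots> \<le> \<bar>c\<bar> * n * (\<bar>t\<bar> * (B * \<bar>t\<bar>^3))"
      using w2 n by (intro mult_left_mono) auto
    also have "\<bar>t\<bar> * (B * \<bar>t\<bar>^3) = B * \<bar>t\<bar>^4" by (simp add: algebra_simps power4_eq_xxxx power3_eq_cube)
    also have "\<bar>t\<bar>^4 = t^4" by (simp add: power_even_abs)
    finally show ?thesis by (simp add: algebra_simps)
  qed
  have b4: "\<bar>v * R\<bar> \<le> P * B\<^sup>2 * (n\<^sup>2 * t^6) * exp (n * a * t\<^sup>2 / 2)"
  proof -
    have "\<bar>v * R\<bar> \<le> P * (n\<^sup>2 * B\<^sup>2 * t^6 * exp (n * a * t\<^sup>2 / 2))"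
      unfolding abs_mult using vb Rb by (intro mult_mono) auto
    then show ?thesis by (simp add: algebra_simps)
  qed
  have main: "\<bar>v * exp (n * w) - (A + c * t + A * n * b * t^3)\<bar>
      \<le> Mv * t\<^sup>2 + Q1 * (n * t^4) + P * B\<^sup>2 * (n\<^sup>2 * t^6) * exp (n * a * t\<^sup>2 / 2)"
  proof -
    have "\<bar>v * exp (n * w) - (A + c * t + A * n * b * t^3)\<bar>
      \<le> \<bar>s * (1 + n * w)\<bar> + \<bar>A * n * (w - b * t^3)\<bar> + \<bar>c * t * n * w\<bar> + \<bar>v * R\<bar>"
      unfolding ident by (rule tri4)
    also have "\<dots> \<le> (Mv * t\<^sup>2 + Mv * a / 2 * (n * t^4)) + \<bar>A\<bar> * M * (n * t^4) + \<bar>c\<bar> * B * (n * t^4)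
        + P * B\<^sup>2 * (n\<^sup>2 * t^6) * exp (n * a * t\<^sup>2 / 2)"
      by (intro add_mono b1 b2 b3 b4)
    also have "\<dots> = Mv * t\<^sup>2 + Q1 * (n * t^4) + P * B\<^sup>2 * (n\<^sup>2 * t^6) * exp (n * a * t\<^sup>2 / 2)"
      by (simp add: Q1_def algebra_simps)
    finally show ?thesis .
  qed
  have ex1: "exp (n * (w - a * t\<^sup>2)) = exp (n * w) * E"
    unfolding E_def by (simp add: right_diff_distrib mult.assoc flip: exp_add)
  have split: "v * exp (n * (w - a * t\<^sup>2)) - exp (- (n * a * t\<^sup>2)) * (A + c * t + A * n * b * t^3)
     = E * (v * exp (n * w) - (A + c * t + A * n * b * t^3))"
    unfolding ex1 by (simp add: E_def algebra_simps)
  have E0: "E > 0" by (simp add: E_def)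
  have EE: "E \<le> exp (- (n * a * t\<^sup>2 / 2))" unfolding E_def using n a
    by (simp add: mult_nonneg_nonneg)
  have EE2: "E * exp (n * a * t\<^sup>2 / 2) = exp (- (n * a * t\<^sup>2 / 2))"
    unfolding E_def by (simp flip: exp_add)
  define y where "y = n * a * t\<^sup>2 / 4"
  have y0: "y \<ge> 0" using n a by (simp add: y_def)
  have Q10: "Q1 \<ge> 0" using M Mv a B0 by (simp add: Q1_def)
  have "\<bar>v * exp (n * (w - a * t\<^sup>2)) - exp (- (n * a * t\<^sup>2)) * (A + c * t + A * n * b * t^3)\<bar>
     \<le> E * (Mv * t\<^sup>2 + Q1 * (n * t^4) + P * B\<^sup>2 * (n\<^sup>2 * t^6) * exp (n * a * t\<^sup>2 / 2))"
    unfolding split abs_mult abs_of_pos[OF E0] using E0 main by (intro mult_left_mono) auto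
  also have "\<dots> \<le> exp (- (n * a * t\<^sup>2 / 2)) * (Mv * t\<^sup>2 + Q1 * (n * t^4)) + P * B\<^sup>2 * (n\<^sup>2 * t^6) * exp (- (n * a * t\<^sup>2 / 2))"
  proof -
    have "E * (Mv * t\<^sup>2 + Q1 * (n * t^4)) \<le> exp (- (n * a * t\<^sup>2 / 2)) * (Mv * t\<^sup>2 + Q1 * (n * t^4))"
      using EE Mv Q10 n by (intro mult_right_mono) auto
    moreover have "E * (P * B\<^sup>2 * (n\<^sup>2 * t^6) * exp (n * a * t\<^sup>2 / 2)) = P * B\<^sup>2 * (n\<^sup>2 * t^6) * exp (- (n * a * t\<^sup>2 / 2))"
      using EE2 by (simp add: algebra_simps)
    moreover have "E * (Mv * t\<^sup>2 + Q1 * (n * t^4) + P * B\<^sup>2 * (n\<^sup>2 * t^6) * exp (n * a * t\<^sup>2 / 2))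
      = E * (Mv * t\<^sup>2 + Q1 * (n * t^4)) + E * (P * B\<^sup>2 * (n\<^sup>2 * t^6) * exp (n * a * t\<^sup>2 / 2))"
      by (rule distrib_left)
    ultimately show ?thesis by linarith
  qed
  also have "\<dots> = exp (- (n * a * t\<^sup>2 / 4)) / n * (4 * Mv / a * (y * exp (-y)) + 16 * Q1 / a\<^sup>2 * (y\<^sup>2 * exp (-y))
      + 64 * P * B\<^sup>2 / a^3 * (y^3 * exp (-y)))"
  proof -
    have ex: "exp (- (n * a * t\<^sup>2 / 2)) = exp (- (n * a * t\<^sup>2 / 4)) * exp (-y)"
      by (simp add: y_def flip: exp_add)
    have an: "a \<noteq> 0" "n \<noteq> 0" using a n by auto
    have y1: "4 * Mv / a * y = n * (Mv * t\<^sup>2)" using an by (simp add: y_def field_simps)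
    have y2: "16 * Q1 / a\<^sup>2 * y\<^sup>2 = n * (Q1 * (n * t^4))" using an
      by (simp add: y_def field_simps power2_eq_square power4_eq_xxxx)
    have y3: "64 * P * B\<^sup>2 / a^3 * y^3 = n * (P * B\<^sup>2 * (n\<^sup>2 * t^6))" using an
      by (simp add: y_def field_simps power2_eq_square power3_eq_cube eval_nat_numeral)
    have "exp (- (n * a * t\<^sup>2 / 4)) / n * (4 * Mv / a * (y * exp (-y)) + 16 * Q1 / a\<^sup>2 * (y\<^sup>2 * exp (-y))
      + 64 * P * B\<^sup>2 / a^3 * (y^3 * exp (-y)))
      = exp (- (n * a * t\<^sup>2 / 4)) / n * exp (-y) * ((4 * Mv / a * y) + (16 * Q1 / a\<^sup>2 * y\<^sup>2)
      + (64 * P * B\<^sup>2 / a^3 * y^3))" by (simp add: algebra_simps)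
    also have "\<dots> = exp (- (n * a * t\<^sup>2 / 4)) * exp (-y) * ((Mv * t\<^sup>2) + (Q1 * (n * t^4))
      + (P * B\<^sup>2 * (n\<^sup>2 * t^6)))" unfolding y1 y2 y3 using an by (simp add: field_simps)
    finally show ?thesis unfolding ex by (simp add: algebra_simps)
  qed
  also have "\<dots> \<le> exp (- (n * a * t\<^sup>2 / 4)) / n * (4 * Mv / a * 1 + 16 * Q1 / a\<^sup>2 * 2 + 64 * P * B\<^sup>2 / a^3 * 6)"
  proof -
    have "4 * Mv / a * (y * exp (-y)) \<le> 4 * Mv / a * 1"
      using exp_poly_bounds(1)[OF y0] Mv a by (intro mult_left_mono) auto
    moreover have "16 * Q1 / a\<^sup>2 * (y\<^sup>2 * exp (-y)) \<le> 16 * Q1 / a\<^sup>2 * 2"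
      using exp_poly_bounds(2)[OF y0] Q10 a by (intro mult_left_mono) auto
    moreover have "64 * P * B\<^sup>2 / a^3 * (y^3 * exp (-y)) \<le> 64 * P * B\<^sup>2 / a^3 * 6"
      using exp_poly_bounds(3)[OF y0] P0 a by (intro mult_left_mono) auto
    ultimately show ?thesis using n by (intro mult_left_mono) auto
  qed
  also have "\<dots> = (4 * Mv / a + 32 * Q1 / a\<^sup>2 + 384 * (P * B\<^sup>2) / a^3) / n * exp (- (n * a * t\<^sup>2 / 4))"
    by (simp add: field_simps)
  finally show ?thesis by (simp add: Q1_def B_def P_def)
qed

lemma laplace_general:
  fixes \<phi> g :: "real \<Rightarrow> real" and a b c A M \<delta> L \<gamma> K \<beta> :: real
  assumes meas: "\<phi> \<in> borel_measurable lborel" "g \<in> borel_measurable lborel"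
    and a: "a > 0" and \<delta>: "0 < \<delta>" "\<delta> \<le> L" and \<gamma>: "\<gamma> > 0" and K: "K \<ge> 0"
    and \<beta>: "\<beta> \<ge> 0" and M: "M \<ge> 0" and Mv: "Mv \<ge> 0"
    and H1: "\<And>t. \<bar>t\<bar> \<le> \<delta> \<Longrightarrow> \<bar>g t + a * t\<^sup>2 - b * t^3\<bar> \<le> M * t^4"
    and H2: "\<And>t. \<bar>t\<bar> \<le> \<delta> \<Longrightarrow> \<bar>\<phi> t - A - c * t\<bar> \<le> Mv * t\<^sup>2"
    and H3: "\<bar>b\<bar> * \<delta> + M * \<delta>\<^sup>2 \<le> a / 2"
    and H4: "\<And>t. -L \<le> t \<Longrightarrow> g t \<le> - (\<gamma> * t\<^sup>2)"
    and H5: "\<And>t. -L \<le> t \<Longrightarrow> \<bar>\<phi> t\<bar> \<le> K * exp (\<beta> * \<bar>t\<bar>)"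
  shows "\<exists>C. \<forall>n\<ge>1. integrable lborel (\<lambda>t. indicator {-L..} t * (\<phi> t * exp (n * g t))) \<and>
     \<bar>(\<integral>t. indicator {-L..} t * (\<phi> t * exp (n * g t)) \<partial>lborel) - A * sqrt (pi / (a * n))\<bar>
       \<le> C * (1 / (n * sqrt n) + exp (- ((n - 1) * (\<gamma> * \<delta>\<^sup>2))) + exp (- ((n - 1) * (a * \<delta>\<^sup>2))))"
proof -
  note meas[measurable]
  define K4 where "K4 = 4 * Mv / a + 32 * (Mv * a / 2 + \<bar>A\<bar> * M + \<bar>c\<bar> * (\<bar>b\<bar> + M * \<delta>)) / a\<^sup>2
        + 384 * ((\<bar>A\<bar> + \<bar>c\<bar> * \<delta> + Mv * \<delta>\<^sup>2) * (\<bar>b\<bar> + M * \<delta>)\<^sup>2) / a^3"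
  define D0 where "D0 = K * exp (\<beta>\<^sup>2 / (2 * \<gamma>))"
  define C where "C = K4 * sqrt (4 * pi / a) + D0 * sqrt (2 * pi / \<gamma>) + \<bar>A\<bar> * sqrt (pi / a)"
  have d0: "\<delta> \<ge> 0" using \<delta> by simp
  have K40: "K4 \<ge> 0" unfolding K4_def using M Mv a d0 by (intro add_nonneg_nonneg) auto
  have D00: "D0 \<ge> 0" using K by (simp add: D0_def)
  have C1: "K4 * sqrt (4 * pi / a) \<ge> 0" "D0 * sqrt (2 * pi / \<gamma>) \<ge> 0" "\<bar>A\<bar> * sqrt (pi / a) \<ge> 0"
    using K40 D00 a \<gamma> by auto
  show ?thesis
  proof (intro exI[of _ C] allI impI)
    fix n :: real assume n: "n \<ge> 1"
    define E where "E = (\<lambda>t. \<phi> t * exp (n * g t))"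
    define G where "G = (\<lambda>t. exp (- (n * a * t\<^sup>2)))"
    define dom where "dom = (\<lambda>t. D0 * exp (- ((\<gamma> / 2) * t\<^sup>2)))"
    have Emeas[measurable]: "E \<in> borel_measurable lborel" unfolding E_def by measurable
    have Gmeas[measurable]: "G \<in> borel_measurable lborel" unfolding G_def by measurable
    have tailpt: "\<bar>E t\<bar> \<le> D0 * exp (- ((n - 1) * (\<gamma> * t\<^sup>2))) * exp (- ((\<gamma> / 2) * t\<^sup>2))" if t: "-L \<le> t" for t
    proof -
      have "\<bar>E t\<bar> = \<bar>\<phi> t\<bar> * exp (n * g t)" by (simp add: E_def abs_mult)
      also have "\<dots> \<le> K * exp (\<beta> * \<bar>t\<bar>) * exp (- (n * (\<gamma> * t\<^sup>2)))"
      proof (intro mult_mono)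
        show "exp (n * g t) \<le> exp (- (n * (\<gamma> * t\<^sup>2)))"
        proof -
          have "n * g t \<le> n * (- (\<gamma> * t\<^sup>2))" using mult_left_mono[OF H4[OF t]] n by simp
          then show ?thesis by simp
        qed
      qed (use H5[OF t] K in auto)
      also have "\<dots> = K * exp (\<beta> * \<bar>t\<bar> - n * (\<gamma> * t\<^sup>2))" by (simp add: exp_diff exp_minus field_simps)
      also have "\<dots> \<le> K * exp (\<beta>\<^sup>2 / (2 * \<gamma>) - (n - 1) * (\<gamma> * t\<^sup>2) - (\<gamma> / 2) * t\<^sup>2)"
      proof (intro mult_left_mono K, subst exp_le_cancel_iff)
        have "0 \<le> (\<beta> - \<gamma> * \<bar>t\<bar>)\<^sup>2" by simp
        then have "2 * \<gamma> * (\<beta> * \<bar>t\<bar>) \<le> \<beta>\<^sup>2 + \<gamma>\<^sup>2 * t\<^sup>2"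
          by (simp add: power2_eq_square algebra_simps)
        then have "\<beta> * \<bar>t\<bar> \<le> \<beta>\<^sup>2 / (2 * \<gamma>) + (\<gamma> / 2) * t\<^sup>2"
          using \<gamma> by (simp add: field_simps power2_eq_square)
        then show "\<beta> * \<bar>t\<bar> - n * (\<gamma> * t\<^sup>2) \<le> \<beta>\<^sup>2 / (2 * \<gamma>) - (n - 1) * (\<gamma> * t\<^sup>2) - \<gamma> / 2 * t\<^sup>2"
          by (simp add: algebra_simps)
      qed
      also have "\<dots> = D0 * exp (- ((n - 1) * (\<gamma> * t\<^sup>2))) * exp (- ((\<gamma> / 2) * t\<^sup>2))"
      proof -
        have ee: "\<beta>\<^sup>2 / (2 * \<gamma>) - (n - 1) * (\<gamma> * t\<^sup>2) - (\<gamma> / 2) * t\<^sup>2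
            = \<beta>\<^sup>2 / (2 * \<gamma>) + (- ((n - 1) * (\<gamma> * t\<^sup>2))) + (- ((\<gamma> / 2) * t\<^sup>2))" by simp
        have "exp (\<beta>\<^sup>2 / (2 * \<gamma>) - (n - 1) * (\<gamma> * t\<^sup>2) - (\<gamma> / 2) * t\<^sup>2)
            = exp (\<beta>\<^sup>2 / (2 * \<gamma>)) * exp (- ((n - 1) * (\<gamma> * t\<^sup>2))) * exp (- ((\<gamma> / 2) * t\<^sup>2))"
          by (simp only: ee exp_add)
        then show ?thesis by (simp add: D0_def mult.assoc)
      qed
      finally show ?thesis .
    qed
    have dompt: "\<bar>E t\<bar> \<le> dom t" if "-L \<le> t" for t
    proof -
      have "exp (- ((n - 1) * (\<gamma> * t\<^sup>2))) \<le> 1" using n \<gamma> by simp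
      from mult_left_le[OF this D00]
      have "D0 * exp (- ((n - 1) * (\<gamma> * t\<^sup>2))) \<le> D0" .
      from mult_right_mono[OF this exp_ge_zero[of "- ((\<gamma> / 2) * t\<^sup>2)"]]
      have "D0 * exp (- ((n - 1) * (\<gamma> * t\<^sup>2))) * exp (- ((\<gamma> / 2) * t\<^sup>2)) \<le> dom t"
        unfolding dom_def .
      then show ?thesis using tailpt[OF that] by linarith
    qed
    have dom_int: "integrable lborel dom"
      unfolding dom_def using gauss_int(1)[of "\<gamma>/2"] \<gamma> by simp
    have dom0: "0 \<le> dom t" for t unfolding dom_def using D00 by simp
    have int_gen: "integrable lborel (\<lambda>t. indicator S t * E t)" if "S \<subseteq> {-L..}" "S \<in> sets lborel" for S
    proof (rule Bochner_Integration.integrable_bound[OF dom_int])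
      show "(\<lambda>t. indicator S t * E t) \<in> borel_measurable lborel" using that(2) by measurable
      show "AE x in lborel. norm (indicator S x * E x) \<le> norm (dom x)"
        using dompt dom0 that(1) by (auto simp: indicator_def)
    qed
    have intI: "integrable lborel (\<lambda>t. indicator {-L..} t * E t)" by (rule int_gen) auto
    define S where "S = {t. -L \<le> t \<and> \<delta> < \<bar>t\<bar>}"
    have Ssets: "S \<in> sets lborel" unfolding S_def by measurable
    have intN: "integrable lborel (\<lambda>t. indicator {-\<delta>..\<delta>} t * E t)" by (rule int_gen) (use \<delta> in auto)
    have intT: "integrable lborel (\<lambda>t. indicator S t * E t)" by (rule int_gen) (use Ssets in \<open>auto simp: S_def\<close>)
    have splitI: "(\<integral>t. indicator {-L..} t * E t \<partial>lborel)
        = (\<integral>t. indicator {-\<delta>..\<delta>} t * E t \<partial>lborel) + (\<integral>t. indicator S t * E t \<partial>lborel)"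
    proof -
      have "(\<lambda>t. indicator {-L..} t * E t) = (\<lambda>t. indicator {-\<delta>..\<delta>} t * E t + indicator S t * E t)"
        using \<delta> by (auto simp: indicator_def S_def fun_eq_iff)
      then show ?thesis using intN intT by simp
    qed
    have Tbound: "\<bar>\<integral>t. indicator S t * E t \<partial>lborel\<bar> \<le> D0 * sqrt (2 * pi / \<gamma>) * exp (- ((n - 1) * (\<gamma> * \<delta>\<^sup>2)))"
    proof -
      have "\<bar>\<integral>t. indicator S t * E t \<partial>lborel\<bar>
          \<le> (\<integral>t. D0 * exp (- ((n - 1) * (\<gamma> * \<delta>\<^sup>2))) * exp (- ((\<gamma> / 2) * t\<^sup>2)) \<partial>lborel)"
      proof (rule integral_abs_bound_integral[OF intT])
        show "integrable lborel (\<lambda>t. D0 * exp (- ((n - 1) * (\<gamma> * \<delta>\<^sup>2))) * exp (- ((\<gamma> / 2) * t\<^sup>2)))"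
          using gauss_int(1)[of "\<gamma>/2"] \<gamma> by simp
        fix t :: real
        show "\<bar>indicator S t * E t\<bar> \<le> D0 * exp (- ((n - 1) * (\<gamma> * \<delta>\<^sup>2))) * exp (- ((\<gamma> / 2) * t\<^sup>2))"
        proof (cases "t \<in> S")
          case True
          then have t: "-L \<le> t" "\<delta> < \<bar>t\<bar>" by (auto simp: S_def)
          have "\<delta>\<^sup>2 \<le> t\<^sup>2" using t(2) d0 abs_le_square_iff[of \<delta> t] by simp
          then have "(n - 1) * (\<gamma> * \<delta>\<^sup>2) \<le> (n - 1) * (\<gamma> * t\<^sup>2)"
            using n \<gamma> by (intro mult_left_mono) auto
          then have "exp (- ((n - 1) * (\<gamma> * t\<^sup>2))) \<le> exp (- ((n - 1) * (\<gamma> * \<delta>\<^sup>2)))" by simp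
          then have "D0 * exp (- ((n - 1) * (\<gamma> * t\<^sup>2))) * exp (- ((\<gamma> / 2) * t\<^sup>2))
              \<le> D0 * exp (- ((n - 1) * (\<gamma> * \<delta>\<^sup>2))) * exp (- ((\<gamma> / 2) * t\<^sup>2))"
            using D00 by (intro mult_right_mono mult_left_mono) auto
          then show ?thesis using tailpt[OF t(1)] True by simp
        qed (use D00 in simp)
      qed
      also have "\<dots> = D0 * exp (- ((n - 1) * (\<gamma> * \<delta>\<^sup>2))) * sqrt (pi / (\<gamma> / 2))"
        using gauss_int(2)[of "\<gamma>/2"] \<gamma> by simp
      finally show ?thesis by (simp add: field_simps)
    qed
    have Gint: "integrable lborel G" "(\<integral>t. G t \<partial>lborel) = sqrt (pi / (n * a))"
      unfolding G_def using gauss_int[of "n * a"] a n by (simp_all add: mult.assoc)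
    define oddf where "oddf = (\<lambda>t. indicator {-\<delta>..\<delta>} t * (G t * (c * t + A * n * b * t^3)))"
    have odd_int: "integrable lborel oddf"
    proof (rule Bochner_Integration.integrable_bound[where f = "\<lambda>t. (\<bar>c\<bar> * \<delta> + \<bar>A\<bar> * n * \<bar>b\<bar> * \<delta>^3) * G t"])
      show "integrable lborel (\<lambda>t. (\<bar>c\<bar> * \<delta> + \<bar>A\<bar> * n * \<bar>b\<bar> * \<delta>^3) * G t)" using Gint by simp
      show "oddf \<in> borel_measurable lborel" unfolding oddf_def by measurable
      show "AE x in lborel. norm (oddf x) \<le> norm ((\<bar>c\<bar> * \<delta> + \<bar>A\<bar> * n * \<bar>b\<bar> * \<delta>^3) * G x)"
      proof (intro AE_I2)
        fix x :: real
        show "norm (oddf x) \<le> norm ((\<bar>c\<bar> * \<delta> + \<bar>A\<bar> * n * \<bar>b\<bar> * \<delta>^3) * G x)"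
        proof (cases "\<bar>x\<bar> \<le> \<delta>")
          case True
          have G0: "G x > 0" by (simp add: G_def)
          have "\<bar>c * x + A * n * b * x^3\<bar> \<le> \<bar>c * x\<bar> + \<bar>A * n * b * x^3\<bar>" by (rule abs_triangle_ineq)
          also have "\<bar>c * x\<bar> + \<bar>A * n * b * x^3\<bar> = \<bar>c\<bar> * \<bar>x\<bar> + \<bar>A\<bar> * n * \<bar>b\<bar> * \<bar>x\<bar>^3"
            using n by (simp add: abs_mult power_abs)
          also have "\<dots> \<le> \<bar>c\<bar> * \<delta> + \<bar>A\<bar> * n * \<bar>b\<bar> * \<delta>^3"
            using True n by (intro add_mono mult_left_mono power_mono) auto
          finally have "\<bar>c * x + A * n * b * x^3\<bar> \<le> \<bar>c\<bar> * \<delta> + \<bar>A\<bar> * n * \<bar>b\<bar> * \<delta>^3" .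
          from mult_left_mono[OF this, of "G x"] G0
          have "G x * \<bar>c * x + A * n * b * x^3\<bar> \<le> G x * (\<bar>c\<bar> * \<delta> + \<bar>A\<bar> * n * \<bar>b\<bar> * \<delta>^3)" by simp
          moreover have "0 \<le> \<bar>c\<bar> * \<delta> + \<bar>A\<bar> * n * \<bar>b\<bar> * \<delta>^3" using d0 n by simp
          ultimately show ?thesis using True G0
            by (simp add: oddf_def abs_mult indicator_def abs_le_iff mult.commute)
        qed (auto simp: oddf_def indicator_def abs_mult abs_le_iff)
      qed
    qed
    have odd0: "(\<integral>t. oddf t \<partial>lborel) = 0"
      by (rule odd_integral_zero) (simp add: oddf_def G_def indicator_def algebra_simps)
    have indG_int: "integrable lborel (\<lambda>t. indicator {-\<delta>..\<delta>} t * G t)"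
      by (rule Bochner_Integration.integrable_bound[OF Gint(1)]) (auto simp: indicator_def G_def)
    have main_int: "integrable lborel (\<lambda>t. A * (indicator {-\<delta>..\<delta>} t * G t) + oddf t)"
      using indG_int odd_int by simp
    have main_eq: "(\<integral>t. A * (indicator {-\<delta>..\<delta>} t * G t) + oddf t \<partial>lborel)
        = A * (\<integral>t. indicator {-\<delta>..\<delta>} t * G t \<partial>lborel)"
      using indG_int odd_int odd0 by simp
    have Nbound: "\<bar>(\<integral>t. indicator {-\<delta>..\<delta>} t * E t \<partial>lborel) - A * (\<integral>t. indicator {-\<delta>..\<delta>} t * G t \<partial>lborel)\<bar>
        \<le> K4 * sqrt (4 * pi / a) / (n * sqrt n)"
    proof -
      have "(\<integral>t. indicator {-\<delta>..\<delta>} t * E t \<partial>lborel) - A * (\<integral>t. indicator {-\<delta>..\<delta>} t * G t \<partial>lborel)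
          = (\<integral>t. indicator {-\<delta>..\<delta>} t * E t - (A * (indicator {-\<delta>..\<delta>} t * G t) + oddf t) \<partial>lborel)"
        using intN main_int main_eq by simp
      also have "\<bar>\<dots>\<bar> \<le> (\<integral>t. K4 / n * exp (- ((n * a / 4) * t\<^sup>2)) \<partial>lborel)"
      proof (rule integral_abs_bound_integral)
        show "integrable lborel (\<lambda>t. indicator {-\<delta>..\<delta>} t * E t - (A * (indicator {-\<delta>..\<delta>} t * G t) + oddf t))"
          using intN main_int by simp
        show "integrable lborel (\<lambda>t. K4 / n * exp (- ((n * a / 4) * t\<^sup>2)))"
          using gauss_int(1)[of "n * a / 4"] a n by simp
        fix t :: real
        show "\<bar>indicator {-\<delta>..\<delta>} t * E t - (A * (indicator {-\<delta>..\<delta>} t * G t) + oddf t)\<bar>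
            \<le> K4 / n * exp (- ((n * a / 4) * t\<^sup>2))"
        proof (cases "\<bar>t\<bar> \<le> \<delta>")
          case True
          have h: "\<bar>\<phi> t * exp (n * ((g t + a * t\<^sup>2) - a * t\<^sup>2)) - exp (- (n * a * t\<^sup>2)) * (A + c * t + A * n * b * t^3)\<bar>
              \<le> K4 / n * exp (- (n * a * t\<^sup>2 / 4))"
            unfolding K4_def
            by (rule heart[OF a n True M Mv _ H3 H2[OF True]]) (use H1[OF True] in simp)
          have "indicator {-\<delta>..\<delta>} t * E t - (A * (indicator {-\<delta>..\<delta>} t * G t) + oddf t)
              = \<phi> t * exp (n * ((g t + a * t\<^sup>2) - a * t\<^sup>2)) - exp (- (n * a * t\<^sup>2)) * (A + c * t + A * n * b * t^3)"
            using True by (simp add: indicator_def abs_le_iff E_def G_def oddf_def algebra_simps)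
          with h show ?thesis by (simp add: algebra_simps)
        qed (use K40 n in \<open>auto simp: indicator_def oddf_def abs_le_iff\<close>)
      qed
      also have "\<dots> = K4 / n * sqrt (pi / (n * a / 4))"
        using gauss_int(2)[of "n * a / 4"] a n by simp
      also have "\<dots> = K4 * sqrt (4 * pi / a) / (n * sqrt n)"
        using a n by (simp add: real_sqrt_divide real_sqrt_mult field_simps)
      finally show ?thesis .
    qed
    have Gbound: "\<bar>(\<integral>t. indicator {-\<delta>..\<delta>} t * G t \<partial>lborel) - sqrt (pi / (n * a))\<bar>
        \<le> sqrt (pi / a) * exp (- ((n - 1) * (a * \<delta>\<^sup>2)))"
    proof -
      have "(\<integral>t. indicator {-\<delta>..\<delta>} t * G t \<partial>lborel) - sqrt (pi / (n * a))
          = - (\<integral>t. (1 - indicator {-\<delta>..\<delta>} t) * G t \<partial>lborel)"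
        using Gint indG_int by (simp add: left_diff_distrib)
      also have "\<bar>\<dots>\<bar> \<le> (\<integral>t. exp (- ((n - 1) * (a * \<delta>\<^sup>2))) * exp (- (a * t\<^sup>2)) \<partial>lborel)"
        unfolding abs_minus_cancel
      proof (rule integral_abs_bound_integral)
        show "integrable lborel (\<lambda>t. (1 - indicator {-\<delta>..\<delta>} t) * G t)"
          using Gint indG_int by (simp add: left_diff_distrib)
        show "integrable lborel (\<lambda>t. exp (- ((n - 1) * (a * \<delta>\<^sup>2))) * exp (- (a * t\<^sup>2)))"
          using gauss_int(1)[of a] a by simp
        fix t :: real
        show "\<bar>(1 - indicator {-\<delta>..\<delta>} t) * G t\<bar> \<le> exp (- ((n - 1) * (a * \<delta>\<^sup>2))) * exp (- (a * t\<^sup>2))"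
        proof (cases "\<bar>t\<bar> \<le> \<delta>")
          case False
          have "\<delta>\<^sup>2 \<le> t\<^sup>2" using False d0 abs_le_square_iff[of \<delta> t] by simp
          then have "(n - 1) * (a * \<delta>\<^sup>2) \<le> (n - 1) * (a * t\<^sup>2)"
            using n a by (intro mult_left_mono) auto
          then have "- (n * a * t\<^sup>2) \<le> - ((n - 1) * (a * \<delta>\<^sup>2)) + - (a * t\<^sup>2)"
            by (simp add: algebra_simps)
          then have "G t \<le> exp (- ((n - 1) * (a * \<delta>\<^sup>2))) * exp (- (a * t\<^sup>2))"
            unfolding G_def by (simp flip: exp_add)
          then show ?thesis using False by (simp add: indicator_def abs_le_iff G_def)
        qed (simp add: indicator_def abs_le_iff)
      qed
      also have "\<dots> = exp (- ((n - 1) * (a * \<delta>\<^sup>2))) * sqrt (pi / a)"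
        using gauss_int(2)[of a] a by simp
      finally show ?thesis by (simp add: mult.commute)
    qed
    have final: "(\<integral>t. indicator {-L..} t * E t \<partial>lborel) - A * sqrt (pi / (a * n))
        = (\<integral>t. indicator S t * E t \<partial>lborel)
          + ((\<integral>t. indicator {-\<delta>..\<delta>} t * E t \<partial>lborel) - A * (\<integral>t. indicator {-\<delta>..\<delta>} t * G t \<partial>lborel))
          + A * ((\<integral>t. indicator {-\<delta>..\<delta>} t * G t \<partial>lborel) - sqrt (pi / (n * a)))"
      unfolding splitI by (simp add: algebra_simps)
    have "\<bar>(\<integral>t. indicator {-L..} t * E t \<partial>lborel) - A * sqrt (pi / (a * n))\<bar>
        \<le> D0 * sqrt (2 * pi / \<gamma>) * exp (- ((n - 1) * (\<gamma> * \<delta>\<^sup>2)))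
          + K4 * sqrt (4 * pi / a) / (n * sqrt n)
          + \<bar>A\<bar> * (sqrt (pi / a) * exp (- ((n - 1) * (a * \<delta>\<^sup>2))))"
    proof -
      have Ab: "\<bar>A * ((\<integral>t. indicator {-\<delta>..\<delta>} t * G t \<partial>lborel) - sqrt (pi / (n * a)))\<bar>
          \<le> \<bar>A\<bar> * (sqrt (pi / a) * exp (- ((n - 1) * (a * \<delta>\<^sup>2))))"
        unfolding abs_mult by (intro mult_left_mono Gbound) auto
      show ?thesis unfolding final
        by (rule order_trans[OF tri3 add_mono[OF add_mono[OF Tbound Nbound] Ab]])
    qed
    also have "\<dots> \<le> C * (1 / (n * sqrt n) + exp (- ((n - 1) * (\<gamma> * \<delta>\<^sup>2))) + exp (- ((n - 1) * (a * \<delta>\<^sup>2))))"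
    proof -
      have p: "1 / (n * sqrt n) \<ge> 0" "exp (- ((n - 1) * (\<gamma> * \<delta>\<^sup>2))) \<ge> 0" "exp (- ((n - 1) * (a * \<delta>\<^sup>2))) \<ge> 0"
        using n by auto
      have c1: "K4 * sqrt (4 * pi / a) \<le> C" "D0 * sqrt (2 * pi / \<gamma>) \<le> C" "\<bar>A\<bar> * sqrt (pi / a) \<le> C"
        unfolding C_def using C1 by linarith+
      have "D0 * sqrt (2 * pi / \<gamma>) * exp (- ((n - 1) * (\<gamma> * \<delta>\<^sup>2))) \<le> C * exp (- ((n - 1) * (\<gamma> * \<delta>\<^sup>2)))"
        by (rule mult_right_mono[OF c1(2) p(2)])
      moreover have "K4 * sqrt (4 * pi / a) / (n * sqrt n) \<le> C * (1 / (n * sqrt n))"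
        using mult_right_mono[OF c1(1) p(1)] by simp
      moreover have "\<bar>A\<bar> * (sqrt (pi / a) * exp (- ((n - 1) * (a * \<delta>\<^sup>2)))) \<le> C * exp (- ((n - 1) * (a * \<delta>\<^sup>2)))"
        using mult_right_mono[OF c1(3) p(3)] by (simp add: mult.assoc)
      ultimately show ?thesis unfolding distrib_left by linarith
    qed
    finally show "integrable lborel (\<lambda>t. indicator {-L..} t * (\<phi> t * exp (n * g t))) \<and>
     \<bar>(\<integral>t. indicator {-L..} t * (\<phi> t * exp (n * g t)) \<partial>lborel) - A * sqrt (pi / (a * n))\<bar>
       \<le> C * (1 / (n * sqrt n) + exp (- ((n - 1) * (\<gamma> * \<delta>\<^sup>2))) + exp (- ((n - 1) * (a * \<delta>\<^sup>2))))"
      using intI unfolding E_def by simp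
  qed
qed

lemma ln_rem:
  fixes u :: real assumes u: "\<bar>u\<bar> \<le> 1/2"
  shows "\<bar>ln (1 + u) - (u - u\<^sup>2 / 2 + u^3 / 3)\<bar> \<le> 2 * u^4"
proof -
  define Rf where "Rf = (\<lambda>x::real. ln (1 + x) - (x - x\<^sup>2 / 2 + x^3 / 3))"
  have D: "DERIV Rf x :> - (x^3) / (1 + x)" if "x > -1" for x
  proof -
    have x: "1 + x \<noteq> 0" "1 + x > 0" using that by auto
    show ?thesis unfolding Rf_def using x
      by (auto intro!: derivative_eq_intros simp: field_simps power2_eq_square power3_eq_cube)
  qed
  have R0: "Rf 0 = 0" by (simp add: Rf_def)
  have key: "\<bar>z\<bar>^3 / (1 + z) \<le> 2 * \<bar>u\<bar>^3" if z: "\<bar>z\<bar> \<le> \<bar>u\<bar>" for z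
  proof -
    have z1: "1 + z \<ge> 1/2" using z u by linarith
    have "\<bar>z\<bar>^3 / (1 + z) \<le> \<bar>z\<bar>^3 / (1/2)"
      using z1 by (intro divide_left_mono) auto
    also have "\<dots> = 2 * \<bar>z\<bar>^3" by simp
    also have "\<dots> \<le> 2 * \<bar>u\<bar>^3" using power_mono[OF z abs_ge_zero, of 3] by simp
    finally show ?thesis .
  qed
  have "\<bar>Rf u\<bar> \<le> 2 * u^4"
  proof (cases "u = 0")
    case True then show ?thesis using R0 by simp
  next
    case False
    obtain z where z: "\<bar>z\<bar> \<le> \<bar>u\<bar>" "Rf u = u * (- (z^3) / (1 + z))" "z > -1"
    proof (cases "u > 0")
      case True
      obtain z where "0 < z" "z < u" "Rf u - Rf 0 = (u - 0) * (- (z^3) / (1 + z))"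
        using MVT2[of 0 u Rf "\<lambda>x. - (x^3) / (1 + x)"] True D by force
      then show ?thesis using that[of z] R0 by auto
    next
      case False
      then have "u < 0" using \<open>u \<noteq> 0\<close> by simp
      obtain z where "u < z" "z < 0" "Rf 0 - Rf u = (0 - u) * (- (z^3) / (1 + z))"
        using MVT2[of u 0 Rf "\<lambda>x. - (x^3) / (1 + x)"] \<open>u < 0\<close> D u by force
      then show ?thesis using that[of z] R0 u by auto
    qed
    have "\<bar>Rf u\<bar> = \<bar>u\<bar> * (\<bar>z\<bar>^3 / (1 + z))"
      using z(2,3) by (simp add: abs_mult power_abs)
    also have "\<dots> \<le> \<bar>u\<bar> * (2 * \<bar>u\<bar>^3)" using key[OF z(1)] by (intro mult_left_mono) auto
    also have "\<dots> = 2 * u^4" by (simp add: power_even_abs eval_nat_numeral)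
    finally show ?thesis .
  qed
  then show ?thesis by (simp add: Rf_def)
qed

lemma powr_bound2:
  fixes x e :: real assumes "1/2 \<le> x" "x \<le> 2"
  shows "x powr e \<le> 2 powr \<bar>e\<bar>"
proof -
  have x: "x > 0" using assms by simp
  have l1: "ln x \<le> ln 2" using assms x by simp
  have l2: "- ln 2 \<le> ln x"
  proof -
    have "ln (1/2) \<le> ln x" using assms x by (subst ln_le_cancel_iff) auto
    then show ?thesis by (simp add: ln_div)
  qed
  have "e * ln x \<le> \<bar>e\<bar> * ln 2"
  proof -
    have "e * ln x \<le> \<bar>e * ln x\<bar>" by simp
    also have "\<dots> = \<bar>e\<bar> * \<bar>ln x\<bar>" by (simp add: abs_mult)
    also have "\<dots> \<le> \<bar>e\<bar> * ln 2" using l1 l2 by (intro mult_left_mono) auto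
    finally show ?thesis .
  qed
  then show ?thesis using x by (simp add: powr_def)
qed

lemma powr_taylor:
  fixes s \<alpha> :: real assumes s: "\<bar>s\<bar> \<le> 1/2"
  shows "\<bar>(1 + s) powr \<alpha> - 1 - \<alpha> * s\<bar> \<le> (\<bar>\<alpha> * (\<alpha> - 1)\<bar> / 2 * 2 powr \<bar>\<alpha> - 2\<bar>) * s\<^sup>2"
proof (cases "s = 0")
  case True then show ?thesis by simp
next
  case False
  define diff where "diff = (\<lambda>m::nat. if m = 0 then (\<lambda>s::real. (1 + s) powr \<alpha>)
      else if m = 1 then (\<lambda>s. \<alpha> * (1 + s) powr (\<alpha> - 1)) else (\<lambda>s. \<alpha> * (\<alpha> - 1) * (1 + s) powr (\<alpha> - 2)))"
  have DER: "\<forall>m t. m < 2 \<and> -1/2 \<le> t \<and> t \<le> 1/2 \<longrightarrow> DERIV (diff m) t :> diff (Suc m) t"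
  proof (intro allI impI)
    fix m :: nat and t :: real assume h: "m < 2 \<and> -1/2 \<le> t \<and> t \<le> 1/2"
    have tp: "1 + t > 0" using h by linarith
    have d1: "DERIV (\<lambda>s. (1 + s) powr \<alpha>) t :> \<alpha> * (1 + t) powr (\<alpha> - 1)"
      using DERIV_fun_powr[of "\<lambda>s. 1 + s" 1 t \<alpha>] tp by (auto intro!: derivative_eq_intros)
    have d2: "DERIV (\<lambda>s. \<alpha> * (1 + s) powr (\<alpha> - 1)) t :> \<alpha> * (\<alpha> - 1) * (1 + t) powr (\<alpha> - 2)"
      using DERIV_cmult[OF DERIV_fun_powr[of "\<lambda>s. 1 + s" 1 t "\<alpha> - 1"], of \<alpha>] tp
      by (auto intro!: derivative_eq_intros simp: algebra_simps)
    show "DERIV (diff m) t :> diff (Suc m) t"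
      using h d1 d2 by (cases m) (auto simp: diff_def)
  qed
  have "\<exists>t. (if s < 0 then s < t \<and> t < 0 else 0 < t \<and> t < s) \<and>
    diff 0 s = (\<Sum>m<2. diff m 0 / fact m * (s - 0) ^ m) + diff 2 t / fact 2 * (s - 0) ^ 2"
    by (rule Taylor[where n=2 and diff=diff and f="diff 0" and a="-1/2" and b="1/2" and c=0 and x=s])
      (use DER s False in auto)
  then obtain \<xi> where \<xi>: "(if s < 0 then s < \<xi> \<and> \<xi> < 0 else 0 < \<xi> \<and> \<xi> < s)"
    "diff 0 s = (\<Sum>m<2. diff m 0 / fact m * (s - 0) ^ m) + diff 2 \<xi> / fact 2 * (s - 0) ^ 2"
    by blast
  have xi: "\<bar>\<xi>\<bar> \<le> 1/2" using \<xi>(1) s by (auto split: if_splits)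
  have eq: "(1 + s) powr \<alpha> - 1 - \<alpha> * s = \<alpha> * (\<alpha> - 1) * (1 + \<xi>) powr (\<alpha> - 2) / 2 * s\<^sup>2"
    using \<xi>(2) by (simp add: diff_def numeral_2_eq_2)
  have pb: "(1 + \<xi>) powr (\<alpha> - 2) \<le> 2 powr \<bar>\<alpha> - 2\<bar>" using xi by (intro powr_bound2) auto
  have "\<bar>(1 + s) powr \<alpha> - 1 - \<alpha> * s\<bar> = \<bar>\<alpha> * (\<alpha> - 1)\<bar> / 2 * (1 + \<xi>) powr (\<alpha> - 2) * s\<^sup>2"
    unfolding eq by (simp add: abs_mult)
  also have "\<dots> \<le> \<bar>\<alpha> * (\<alpha> - 1)\<bar> / 2 * 2 powr \<bar>\<alpha> - 2\<bar> * s\<^sup>2"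
    using pb by (intro mult_right_mono mult_left_mono) auto
  finally show ?thesis by simp
qed

lemma powr_growth:
  fixes s \<alpha> :: real assumes s: "-1/2 \<le> s"
  shows "\<bar>(1 + s) powr \<alpha>\<bar> \<le> exp \<bar>\<alpha>\<bar> * exp (\<bar>\<alpha>\<bar> * \<bar>s\<bar>)"
proof -
  have p: "1 + s > 0" using s by linarith
  have l: "\<bar>ln (1 + s)\<bar> \<le> 1 + \<bar>s\<bar>"
  proof (cases "s \<ge> 0")
    case True
    then have "0 \<le> ln (1 + s)" "ln (1 + s) \<le> s" using ln_add_one_self_le_self by auto
    then show ?thesis using True by simp
  next
    case False
    have "ln (1/2) \<le> ln (1 + s)" using s p by (subst ln_le_cancel_iff) auto
    then have "- ln 2 \<le> ln (1 + s)" by (simp add: ln_div)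
    moreover have "ln (1 + s) \<le> 0" using False p by simp
    ultimately show ?thesis using ln_2_less_1 by linarith
  qed
  have "\<alpha> * ln (1 + s) \<le> \<bar>\<alpha>\<bar> + \<bar>\<alpha>\<bar> * \<bar>s\<bar>"
  proof -
    have "\<alpha> * ln (1 + s) \<le> \<bar>\<alpha>\<bar> * \<bar>ln (1 + s)\<bar>" by (metis abs_ge_self abs_mult)
    also have "\<dots> \<le> \<bar>\<alpha>\<bar> * (1 + \<bar>s\<bar>)" using l by (intro mult_left_mono) auto
    finally show ?thesis by (simp add: algebra_simps)
  qed
  then have "(1 + s) powr \<alpha> \<le> exp (\<bar>\<alpha>\<bar> + \<bar>\<alpha>\<bar> * \<bar>s\<bar>)" using p by (simp add: powr_def)
  then show ?thesis by (simp add: exp_add)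
qed



lemma final_generic:
  fixes Xf Df J :: "real \<Rightarrow> real" and Fz A a C ea eb :: real
  assumes X: "\<And>n. n \<ge> 1 \<Longrightarrow> Xf n = exp (n * Fz) * J n"
    and bound: "\<And>n. n \<ge> 1 \<Longrightarrow> \<bar>J n - A * sqrt (pi / (a * n))\<bar>
        \<le> C * (1 / (n * sqrt n) + exp (- ((n - 1) * ea)) + exp (- ((n - 1) * eb)))"
    and A: "A > 0" and a: "a > 0" and e: "ea > 0" "eb > 0"
    and D: "\<And>n. n \<ge> 1 \<Longrightarrow> Df n = exp (n * Fz) * (A * sqrt (pi / (a * n)))"
  shows "(\<lambda>n. Xf n / Df n - 1) \<in> O(\<lambda>n. 1 / n)"
proof -
  define h where "h = (\<lambda>n::real. sqrt n * (1 / (n * sqrt n) + exp (- ((n - 1) * ea)) + exp (- ((n - 1) * eb))))"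
  have h: "h \<in> O(\<lambda>n. 1 / n)" unfolding h_def using e by real_asymp
  define K where "K = C / (A * sqrt (pi / a))"
  have "(\<lambda>n. Xf n / Df n - 1) \<in> O(h)"
  proof (rule bigoI[where c = K])
    show "\<forall>\<^sub>F n in at_top. norm (Xf n / Df n - 1) \<le> K * norm (h n)"
      using eventually_ge_at_top[of "1::real"]
    proof eventually_elim
      case (elim n)
      have n0: "n > 0" "sqrt n > 0" using elim by auto
      have s: "sqrt (pi / (a * n)) = sqrt (pi / a) / sqrt n"
        by (simp add: real_sqrt_divide real_sqrt_mult)
      have sp: "sqrt (pi / a) > 0" using a by simp
      define S where "S = 1 / (n * sqrt n) + exp (- ((n - 1) * ea)) + exp (- ((n - 1) * eb))"
      have S0: "S \<ge> 0" using n0 by (simp add: S_def)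
      have hn: "h n = sqrt n * S" by (simp add: h_def S_def)
      have Dpos: "Df n > 0" using D[OF elim] A a n0 by simp
      have "Xf n / Df n - 1 = (J n - A * sqrt (pi / (a * n))) / (A * sqrt (pi / (a * n)))"
        using X[OF elim] D[OF elim] A a n0 by (simp add: field_simps)
      also have "\<bar>\<dots>\<bar> \<le> C * S / (A * sqrt (pi / (a * n)))"
      proof -
        have pos: "A * sqrt (pi / (a * n)) > 0" using A a n0 by simp
        have "\<bar>(J n - A * sqrt (pi / (a * n))) / (A * sqrt (pi / (a * n)))\<bar>
            = \<bar>J n - A * sqrt (pi / (a * n))\<bar> / (A * sqrt (pi / (a * n)))" using pos by (simp add: abs_divide)
        also have "\<dots> \<le> C * S / (A * sqrt (pi / (a * n)))"
          using divide_right_mono[OF bound[OF elim], of "A * sqrt (pi / (a * n))"] pos by (simp add: S_def)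
        finally show ?thesis .
      qed
      also have "\<dots> = K * (sqrt n * S)"
        unfolding s K_def using n0 sp A by (simp add: field_simps)
      finally have "\<bar>Xf n / Df n - 1\<bar> \<le> K * (sqrt n * S)" .
      moreover have "norm (h n) = sqrt n * S" using hn S0 n0 by simp
      ultimately show ?case by simp
    qed
  qed
  then show ?thesis using h by (rule landau_o.big_trans)
qed

lemma case1_H1:
  fixes t :: real assumes t: "\<bar>t\<bar> \<le> 1/10"
  shows "\<bar>(ln (1 + (2 * t + t\<^sup>2) / 3) - 2/3 * (t + t\<^sup>2)) + 5/9 * t\<^sup>2 - (-10/81) * t^3\<bar> \<le> 3 * t^4"
proof -
  define u where "u = (2 * t + t\<^sup>2) / 3"
  have tb: "-1/10 \<le> t" "t \<le> 1/10" using t by auto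
  have uu: "\<bar>u\<bar> \<le> \<bar>t\<bar>"
  proof -
    have ue: "u = t * ((2 + t) / 3)" by (simp add: u_def power2_eq_square field_simps)
    have "\<bar>u\<bar> = \<bar>t\<bar> * \<bar>(2 + t) / 3\<bar>" unfolding ue by (rule abs_mult)
    also have "\<dots> \<le> \<bar>t\<bar> * 1" using tb by (intro mult_left_mono) auto
    finally show ?thesis by simp
  qed
  have uh: "\<bar>u\<bar> \<le> 1/2" using uu t by linarith
  have R: "\<bar>ln (1 + u) - (u - u\<^sup>2 / 2 + u^3 / 3)\<bar> \<le> 2 * u^4" by (rule ln_rem[OF uh])
  have u4: "u^4 \<le> t^4"
  proof -
    have "\<bar>u\<bar>^4 \<le> \<bar>t\<bar>^4" using uu by (intro power_mono) auto
    then show ?thesis by (simp add: power_even_abs)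
  qed
  have ident: "u - u\<^sup>2 / 2 + u^3 / 3 - 2/3 * (t + t\<^sup>2) + 5/9 * t\<^sup>2 + 10/81 * t^3
      = t^4 * (5/54 + 2/27 * t + 1/81 * t\<^sup>2)"
    unfolding u_def by (simp add: field_simps power2_eq_square power3_eq_cube power4_eq_xxxx)
  have t2: "t\<^sup>2 \<le> 1/100" "0 \<le> t\<^sup>2"
  proof -
    have "t\<^sup>2 \<le> (1/10)\<^sup>2" using abs_le_square_iff[of t "1/10"] t by simp
    then show "t\<^sup>2 \<le> 1/100" by (simp add: power2_eq_square)
  qed simp
  have Q: "\<bar>5/54 + 2/27 * t + 1/81 * t\<^sup>2\<bar> \<le> 1"
    unfolding abs_le_iff using tb t2 by (intro conjI) linarith+
  have Qt: "\<bar>t^4 * (5/54 + 2/27 * t + 1/81 * t\<^sup>2)\<bar> \<le> t^4"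
  proof -
    have "\<bar>t^4 * (5/54 + 2/27 * t + 1/81 * t\<^sup>2)\<bar> = t^4 * \<bar>5/54 + 2/27 * t + 1/81 * t\<^sup>2\<bar>"
      by (simp add: abs_mult power_even_abs)
    also have "\<dots> \<le> t^4 * 1" using Q by (intro mult_left_mono) (auto simp: power_even_abs)
    finally show ?thesis by simp
  qed
  have "(ln (1 + (2 * t + t\<^sup>2) / 3) - 2/3 * (t + t\<^sup>2)) + 5/9 * t\<^sup>2 - (-10/81) * t^3
      = (ln (1 + u) - (u - u\<^sup>2 / 2 + u^3 / 3)) + t^4 * (5/54 + 2/27 * t + 1/81 * t\<^sup>2)"
    using ident by (simp add: u_def[symmetric])
  then show ?thesis using R Qt u4 abs_triangle_ineq[of "ln (1 + u) - (u - u\<^sup>2 / 2 + u^3 / 3)" "t^4 * (5/54 + 2/27 * t + 1/81 * t\<^sup>2)"]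
    by linarith
qed

lemma case2_H1:
  fixes t :: real assumes t: "\<bar>t\<bar> \<le> 1/10"
  shows "\<bar>(ln (1 + (4 * t + t\<^sup>2) / 6) - (2 * t + t\<^sup>2) / 3) + 7/18 * t\<^sup>2 - (-1/81) * t^3\<bar> \<le> 3 * t^4"
proof -
  define u where "u = (4 * t + t\<^sup>2) / 6"
  have tb: "-1/10 \<le> t" "t \<le> 1/10" using t by auto
  have uu: "\<bar>u\<bar> \<le> \<bar>t\<bar>"
  proof -
    have ue: "u = t * ((4 + t) / 6)" by (simp add: u_def power2_eq_square field_simps)
    have "\<bar>u\<bar> = \<bar>t\<bar> * \<bar>(4 + t) / 6\<bar>" unfolding ue by (rule abs_mult)
    also have "\<dots> \<le> \<bar>t\<bar> * 1" using tb by (intro mult_left_mono) auto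
    finally show ?thesis by simp
  qed
  have uh: "\<bar>u\<bar> \<le> 1/2" using uu t by linarith
  have R: "\<bar>ln (1 + u) - (u - u\<^sup>2 / 2 + u^3 / 3)\<bar> \<le> 2 * u^4" by (rule ln_rem[OF uh])
  have u4: "u^4 \<le> t^4"
  proof -
    have "\<bar>u\<bar>^4 \<le> \<bar>t\<bar>^4" using uu by (intro power_mono) auto
    then show ?thesis by (simp add: power_even_abs)
  qed
  have ident: "u - u\<^sup>2 / 2 + u^3 / 3 - (2 * t + t\<^sup>2) / 3 + 7/18 * t\<^sup>2 + 1/81 * t^3
      = t^4 * (13/216 + 1/54 * t + 1/648 * t\<^sup>2)"
    unfolding u_def by (simp add: field_simps power2_eq_square power3_eq_cube power4_eq_xxxx)
  have t2: "t\<^sup>2 \<le> 1/100" "0 \<le> t\<^sup>2"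
  proof -
    have "t\<^sup>2 \<le> (1/10)\<^sup>2" using abs_le_square_iff[of t "1/10"] t by simp
    then show "t\<^sup>2 \<le> 1/100" by (simp add: power2_eq_square)
  qed simp
  have Q: "\<bar>13/216 + 1/54 * t + 1/648 * t\<^sup>2\<bar> \<le> 1"
    unfolding abs_le_iff using tb t2 by (intro conjI) linarith+
  have Qt: "\<bar>t^4 * (13/216 + 1/54 * t + 1/648 * t\<^sup>2)\<bar> \<le> t^4"
  proof -
    have "\<bar>t^4 * (13/216 + 1/54 * t + 1/648 * t\<^sup>2)\<bar> = t^4 * \<bar>13/216 + 1/54 * t + 1/648 * t\<^sup>2\<bar>"
      by (simp add: abs_mult power_even_abs)
    also have "\<dots> \<le> t^4 * 1" using Q by (intro mult_left_mono) (auto simp: power_even_abs)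
    finally show ?thesis by simp
  qed
  have "(ln (1 + (4 * t + t\<^sup>2) / 6) - (2 * t + t\<^sup>2) / 3) + 7/18 * t\<^sup>2 - (-1/81) * t^3
      = (ln (1 + u) - (u - u\<^sup>2 / 2 + u^3 / 3)) + t^4 * (13/216 + 1/54 * t + 1/648 * t\<^sup>2)"
    using ident by (simp add: u_def[symmetric])
  then show ?thesis using R Qt u4 abs_triangle_ineq[of "ln (1 + u) - (u - u\<^sup>2 / 2 + u^3 / 3)" "t^4 * (13/216 + 1/54 * t + 1/648 * t\<^sup>2)"]
    by linarith
qed

lemma case1_H4:
  fixes t :: real assumes t: "-(1/2) \<le> t"
  shows "ln (1 + (2 * t + t\<^sup>2) / 3) - 2/3 * (t + t\<^sup>2) \<le> - (1/3 * t\<^sup>2)"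
proof -
  have u: "-1 < (2 * t + t\<^sup>2) / 3"
  proof -
    have "0 \<le> (1 + t)\<^sup>2" by simp
    then show ?thesis by (simp add: power2_eq_square algebra_simps)
  qed
  have "ln (1 + (2 * t + t\<^sup>2) / 3) \<le> (2 * t + t\<^sup>2) / 3" by (rule ln_add_one_self_le_self2[OF u])
  then show ?thesis by (simp add: algebra_simps)
qed

lemma case2_H4:
  fixes t :: real assumes t: "-1 \<le> t"
  shows "ln (1 + (4 * t + t\<^sup>2) / 6) - (2 * t + t\<^sup>2) / 3 \<le> - (1/6 * t\<^sup>2)"
proof -
  have u: "-1 < (4 * t + t\<^sup>2) / 6"
  proof -
    have "0 \<le> (2 + t)\<^sup>2" by simp
    then show ?thesis by (simp add: power2_eq_square algebra_simps)
  qed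
  have "ln (1 + (4 * t + t\<^sup>2) / 6) \<le> (4 * t + t\<^sup>2) / 6" by (rule ln_add_one_self_le_self2[OF u])
  then show ?thesis by (simp add: algebra_simps)
qed

lemma case1_eq:
  fixes t :: real assumes t: "-(1/2) \<le> t"
  shows "ln (1 + (1 + t)\<^sup>2 / 2) - (1 + t - sqrt 2 * p_const)\<^sup>2 / (2 * c_const)
     = (ln (3/2) - 1/6) + (ln (1 + (2 * t + t\<^sup>2) / 3) - 2/3 * (t + t\<^sup>2))"
proof -
  have sp: "sqrt 2 * p_const = 1/2" by (simp add: p_const_def)
  have u1: "-1 < (2 * t + t\<^sup>2) / 3"
  proof -
    have "0 \<le> (1 + t)\<^sup>2" by simp
    then show ?thesis by (simp add: power2_eq_square algebra_simps)
  qed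
  have u: "0 < 1 + (2 * t + t\<^sup>2) / 3" using u1 by linarith
  have e: "1 + (1 + t)\<^sup>2 / 2 = 3/2 * (1 + (2 * t + t\<^sup>2) / 3)" by (simp add: power2_eq_square field_simps)
  have l: "ln (1 + (1 + t)\<^sup>2 / 2) = ln (3/2) + ln (1 + (2 * t + t\<^sup>2) / 3)"
    unfolding e using u by (intro ln_mult_pos) auto
  show ?thesis unfolding l sp by (simp add: c_const_def power2_eq_square field_simps)
qed

lemma case2_eq:
  fixes t :: real assumes t: "-1 \<le> t"
  shows "ln (1 + (2 + t)\<^sup>2 / 2) - (2 + t - sqrt 2 * (2 * p_const))\<^sup>2 / (2 * (2 * c_const))
     = (ln 3 - 1/3) + (ln (1 + (4 * t + t\<^sup>2) / 6) - (2 * t + t\<^sup>2) / 3)"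
proof -
  have sp: "sqrt 2 * (2 * p_const) = 1" by (simp add: p_const_def)
  have u1: "-1 < (4 * t + t\<^sup>2) / 6"
  proof -
    have "0 \<le> (2 + t)\<^sup>2" by simp
    then show ?thesis by (simp add: power2_eq_square algebra_simps)
  qed
  have u: "0 < 1 + (4 * t + t\<^sup>2) / 6" using u1 by linarith
  have e: "1 + (2 + t)\<^sup>2 / 2 = 3 * (1 + (4 * t + t\<^sup>2) / 6)" by (simp add: power2_eq_square field_simps)
  have l: "ln (1 + (2 + t)\<^sup>2 / 2) = ln 3 + ln (1 + (4 * t + t\<^sup>2) / 6)"
    unfolding e using u by (intro ln_mult_pos) auto
  show ?thesis unfolding l sp by (simp add: c_const_def power2_eq_square field_simps)
qed

lemma amp_H2:
  fixes Am xc \<alpha> t :: real assumes xc: "xc \<ge> 1" and t: "\<bar>t\<bar> \<le> 1/2"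
  shows "\<bar>Am * (1 + t / xc) powr \<alpha> - Am - (Am * \<alpha> / xc) * t\<bar>
    \<le> (\<bar>Am\<bar> * (\<bar>\<alpha> * (\<alpha> - 1)\<bar> / 2 * 2 powr \<bar>\<alpha> - 2\<bar>)) * t\<^sup>2"
proof -
  define s where "s = t / xc"
  have ss: "\<bar>s\<bar> \<le> \<bar>t\<bar>"
  proof -
    have "\<bar>s\<bar> = \<bar>t\<bar> / xc" using xc by (simp add: s_def abs_divide)
    also have "\<dots> \<le> \<bar>t\<bar> / 1" using xc by (intro divide_left_mono) auto
    finally show ?thesis by simp
  qed
  have sh: "\<bar>s\<bar> \<le> 1/2" using ss t by linarith
  have s2: "s\<^sup>2 \<le> t\<^sup>2" using abs_le_square_iff[of s t] ss by simp
  have M0: "0 \<le> \<bar>\<alpha> * (\<alpha> - 1)\<bar> / 2 * 2 powr \<bar>\<alpha> - 2\<bar>" by simp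
  have "Am * (1 + t / xc) powr \<alpha> - Am - (Am * \<alpha> / xc) * t = Am * ((1 + s) powr \<alpha> - 1 - \<alpha> * s)"
    by (simp add: s_def algebra_simps)
  then have "\<bar>Am * (1 + t / xc) powr \<alpha> - Am - (Am * \<alpha> / xc) * t\<bar> = \<bar>Am\<bar> * \<bar>(1 + s) powr \<alpha> - 1 - \<alpha> * s\<bar>"
    by (simp add: abs_mult)
  also have "\<dots> \<le> \<bar>Am\<bar> * ((\<bar>\<alpha> * (\<alpha> - 1)\<bar> / 2 * 2 powr \<bar>\<alpha> - 2\<bar>) * s\<^sup>2)"
    by (intro mult_left_mono powr_taylor sh) auto
  also have "\<dots> \<le> \<bar>Am\<bar> * ((\<bar>\<alpha> * (\<alpha> - 1)\<bar> / 2 * 2 powr \<bar>\<alpha> - 2\<bar>) * t\<^sup>2)"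
    using s2 M0 by (intro mult_left_mono) auto
  finally show ?thesis by (simp add: mult.assoc)
qed

lemma amp_H5:
  fixes Am xc \<alpha> t :: real assumes xc: "xc \<ge> 1" and t: "- (xc / 2) \<le> t"
  shows "\<bar>Am * (1 + t / xc) powr \<alpha>\<bar> \<le> (\<bar>Am\<bar> * exp \<bar>\<alpha>\<bar>) * exp (\<bar>\<alpha>\<bar> * \<bar>t\<bar>)"
proof -
  define s where "s = t / xc"
  have ss: "\<bar>s\<bar> \<le> \<bar>t\<bar>"
  proof -
    have "\<bar>s\<bar> = \<bar>t\<bar> / xc" using xc by (simp add: s_def abs_divide)
    also have "\<dots> \<le> \<bar>t\<bar> / 1" using xc by (intro divide_left_mono) auto
    finally show ?thesis by simp
  qed
  have sl: "-1/2 \<le> s" using t xc by (simp add: s_def field_simps)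
  have "\<bar>Am * (1 + t / xc) powr \<alpha>\<bar> = \<bar>Am\<bar> * \<bar>(1 + s) powr \<alpha>\<bar>" by (simp add: s_def abs_mult)
  also have "\<dots> \<le> \<bar>Am\<bar> * (exp \<bar>\<alpha>\<bar> * exp (\<bar>\<alpha>\<bar> * \<bar>s\<bar>))"
    by (intro mult_left_mono powr_growth sl) auto
  also have "\<dots> \<le> \<bar>Am\<bar> * (exp \<bar>\<alpha>\<bar> * exp (\<bar>\<alpha>\<bar> * \<bar>t\<bar>))"
    using ss by (intro mult_left_mono) (auto intro: mult_left_mono)
  finally show ?thesis by (simp add: mult.assoc)
qed

lemma xint_transfer:
  fixes q C xc L F0 \<alpha> n :: real and g :: "real \<Rightarrow> real"
  assumes q: "q > 0" and xc: "xc > 0" and L: "L = xc - sqrt 2 * q"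
    and hg: "\<And>t. -L \<le> t \<Longrightarrow> ln (1 + (xc + t)\<^sup>2 / 2) - (xc + t - sqrt 2 * q)\<^sup>2 / (2 * C) = F0 + g t"
    and int: "integrable lborel (\<lambda>t. indicator {-L..} t * ((xc powr \<alpha> / 2 powr (\<alpha> / 2) / sqrt 2 * (1 + t / xc) powr \<alpha>) * exp (n * g t)))"
  shows "Xint q C \<alpha> n = exp (n * F0) * (\<integral>t. indicator {-L..} t * ((xc powr \<alpha> / 2 powr (\<alpha> / 2) / sqrt 2 * (1 + t / xc) powr \<alpha>) * exp (n * g t)) \<partial>lborel)"
proof -
  define \<phi> where "\<phi> = (\<lambda>t. xc powr \<alpha> / 2 powr (\<alpha> / 2) / sqrt 2 * (1 + t / xc) powr \<alpha>)"
  define h where "h = (\<lambda>\<rho>::real. \<rho> powr \<alpha> * (1 + \<rho>\<^sup>2) powr n * exp (- n * (\<rho> - q)\<^sup>2 / C))"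
  define F where "F = (\<lambda>\<rho>. indicator {q..} \<rho> * h \<rho>)"
  have s2: "sqrt 2 > 0" by simp
  have sq: "sqrt 2 * q > 0" using q by simp
  have pt: "F (xc / sqrt 2 + (1 / sqrt 2) * t) = sqrt 2 * exp (n * F0) * (indicator {-L..} t * (\<phi> t * exp (n * g t)))" for t
  proof -
    have re: "xc / sqrt 2 + (1 / sqrt 2) * t = (xc + t) / sqrt 2" by (simp add: add_divide_distrib)
    show ?thesis
    proof (cases "-L \<le> t")
      case False
      then have "xc + t < sqrt 2 * q" using L by simp
      then have "(xc + t) / sqrt 2 < q" using s2 by (simp add: divide_less_eq mult.commute)
      then show ?thesis using False unfolding re by (simp add: F_def indicator_def)
    next
      case True
      define \<rho> where "\<rho> = (xc + t) / sqrt 2"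
      have xt: "xc + t \<ge> sqrt 2 * q" using True L by simp
      have xtp: "xc + t > 0" using xt sq by linarith
      have \<rho>q: "q \<le> \<rho>" unfolding \<rho>_def using xt s2 by (simp add: le_divide_eq mult.commute)
      have \<rho>p: "\<rho> > 0" using \<rho>q q by linarith
      have e1: "\<rho> powr \<alpha> = xc powr \<alpha> * (1 + t / xc) powr \<alpha> / 2 powr (\<alpha> / 2)"
      proof -
        have "xc + t = xc * (1 + t / xc)" using xc by (simp add: field_simps)
        then have a1: "(xc + t) powr \<alpha> = xc powr \<alpha> * (1 + t / xc) powr \<alpha>" by (simp add: powr_mult)
        have a2: "sqrt 2 powr \<alpha> = 2 powr (\<alpha> / 2)"
          by (simp add: powr_half_sqrt[symmetric] powr_powr)
        show ?thesis unfolding \<rho>_def powr_divide a1 a2 ..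
      qed
      have r2: "\<rho>\<^sup>2 = (xc + t)\<^sup>2 / 2" by (simp add: \<rho>_def power_divide)
      have e2: "(1 + \<rho>\<^sup>2) powr n = exp (n * ln (1 + (xc + t)\<^sup>2 / 2))"
      proof -
        have "1 + \<rho>\<^sup>2 > 0" by (simp add: add_pos_nonneg)
        then show ?thesis by (simp add: powr_def r2 mult.commute)
      qed
      have e3: "- n * (\<rho> - q)\<^sup>2 / C = - (n * ((xc + t - sqrt 2 * q)\<^sup>2 / (2 * C)))"
      proof -
        have "\<rho> - q = (xc + t - sqrt 2 * q) / sqrt 2" using s2 by (simp add: \<rho>_def field_simps)
        then have sqe: "(\<rho> - q)\<^sup>2 = (xc + t - sqrt 2 * q)\<^sup>2 / 2" by (simp add: power_divide)
        show ?thesis unfolding sqe by simp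
      qed
      have "h \<rho> = xc powr \<alpha> * (1 + t / xc) powr \<alpha> / 2 powr (\<alpha> / 2)
          * exp (n * (ln (1 + (xc + t)\<^sup>2 / 2) - (xc + t - sqrt 2 * q)\<^sup>2 / (2 * C)))"
        unfolding h_def e1 e2 e3 by (simp add: right_diff_distrib exp_diff exp_minus field_simps)
      also have "\<dots> = xc powr \<alpha> * (1 + t / xc) powr \<alpha> / 2 powr (\<alpha> / 2) * (exp (n * F0) * exp (n * g t))"
        unfolding hg[OF True] by (simp add: distrib_left exp_add)
      finally have "h \<rho> = \<dots>" .
      then show ?thesis using True \<rho>q s2 unfolding re \<rho>_def[symmetric]
        by (simp add: F_def \<phi>_def indicator_def field_simps)
    qed
  qed
  have intF: "integrable lborel F"
  proof -
    have "integrable lborel (\<lambda>t. F (xc / sqrt 2 + (1 / sqrt 2) * t))"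
      unfolding pt by (rule integrable_mult_right) (use int in \<open>simp only: \<phi>_def\<close>)
    then show ?thesis using lborel_integrable_real_affine_iff[of "1 / sqrt 2" F "xc / sqrt 2"] by simp
  qed
  have "(\<integral>\<rho>. F \<rho> \<partial>lborel) = \<bar>1 / sqrt 2\<bar> *\<^sub>R (\<integral>t. F (xc / sqrt 2 + (1 / sqrt 2) * t) \<partial>lborel)"
    by (rule lborel_integral_real_affine) simp
  also have "\<dots> = exp (n * F0) * (\<integral>t. indicator {-L..} t * (\<phi> t * exp (n * g t)) \<partial>lborel)"
    unfolding pt by simp
  finally have IF: "(\<integral>\<rho>. F \<rho> \<partial>lborel) = exp (n * F0) * (\<integral>t. indicator {-L..} t * (\<phi> t * exp (n * g t)) \<partial>lborel)" .
  have si: "set_integrable lborel {q..} h"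
    unfolding set_integrable_def using intF by (simp add: F_def)
  have "Xint q C \<alpha> n = integral {q..} h" by (simp add: Xint_def h_def)
  also have "\<dots> = (LINT x:{q..}|lborel. h x)" by (rule set_borel_integral_eq_integral(2)[OF si, symmetric])
  also have "\<dots> = (\<integral>\<rho>. F \<rho> \<partial>lborel)" by (simp add: set_lebesgue_integral_def F_def)
  finally show ?thesis using IF unfolding \<phi>_def by simp
qed

theorem lemma6p4:
  fixes \<alpha> :: real
  shows "((\<lambda>n. Xint p_const c_const \<alpha> n /
            (3 * sqrt (pi / 5) / 2 powr (\<alpha> / 2 + 1 / 2) *
             ((3 / 2) powr n / (exp (n / 6) * sqrt n))) - 1)
           \<in> O[at_top](\<lambda>n. 1 / n)) \<and>
         ((\<lambda>n. Xint (2 * p_const) (2 * c_const) \<alpha> n /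
            (3 * sqrt (pi / 7) * 2 powr (\<alpha> / 2) *
             (3 powr n / (exp (n / 3) * sqrt n))) - 1)
           \<in> O[at_top](\<lambda>n. 1 / n))"
proof
  define M\<alpha> where "M\<alpha> = \<bar>\<alpha> * (\<alpha> - 1)\<bar> / 2 * 2 powr \<bar>\<alpha> - 2\<bar>"
  have M\<alpha>0: "M\<alpha> \<ge> 0" by (simp add: M\<alpha>_def)
  have s2pow: "2 powr (\<alpha> / 2 + 1 / 2) = 2 powr (\<alpha> / 2) * sqrt 2"
    by (simp add: powr_add powr_half_sqrt)
  define A1 where "A1 = 1 powr \<alpha> / 2 powr (\<alpha> / 2) / sqrt 2"
  define \<phi>1 where "\<phi>1 = (\<lambda>t::real. A1 * (1 + t / 1) powr \<alpha>)"
  define g1 where "g1 = (\<lambda>t::real. ln (1 + (2 * t + t\<^sup>2) / 3) - 2/3 * (t + t\<^sup>2))"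
  have A1p: "A1 > 0" by (simp add: A1_def)
  have L1: "\<exists>C. \<forall>n\<ge>1. integrable lborel (\<lambda>t. indicator {-(1/2)..} t * (\<phi>1 t * exp (n * g1 t))) \<and>
     \<bar>(\<integral>t. indicator {-(1/2)..} t * (\<phi>1 t * exp (n * g1 t)) \<partial>lborel) - A1 * sqrt (pi / (5/9 * n))\<bar>
       \<le> C * (1 / (n * sqrt n) + exp (- ((n - 1) * (1/3 * (1/10)\<^sup>2))) + exp (- ((n - 1) * (5/9 * (1/10)\<^sup>2))))"
  proof (rule laplace_general[where b = "-10/81" and c = "A1 * \<alpha> / 1" and M = 3 and Mv = "\<bar>A1\<bar> * M\<alpha>"
        and K = "\<bar>A1\<bar> * exp \<bar>\<alpha>\<bar>" and \<beta> = "\<bar>\<alpha>\<bar>"])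
    show "\<phi>1 \<in> borel_measurable lborel" unfolding \<phi>1_def by measurable
    show "g1 \<in> borel_measurable lborel" unfolding g1_def by measurable
    show "\<And>t. \<bar>t\<bar> \<le> 1/10 \<Longrightarrow> \<bar>g1 t + 5/9 * t\<^sup>2 - (-10/81) * t^3\<bar> \<le> 3 * t^4"
      unfolding g1_def by (rule case1_H1)
    show "\<And>t. -(1/2) \<le> t \<Longrightarrow> g1 t \<le> - (1/3 * t\<^sup>2)"
      unfolding g1_def by (rule case1_H4)
    show "\<bar>\<phi>1 t - A1 - A1 * \<alpha> / 1 * t\<bar> \<le> \<bar>A1\<bar> * M\<alpha> * t\<^sup>2" if "\<bar>t\<bar> \<le> 1/10" for t
    proof -
      have "\<bar>t\<bar> \<le> 1/2" using that by simp
      from amp_H2[where Am = A1 and xc = 1 and \<alpha> = \<alpha> and t = t, OF _ this]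
      show ?thesis unfolding \<phi>1_def M\<alpha>_def by simp
    qed
    show "\<bar>\<phi>1 t\<bar> \<le> \<bar>A1\<bar> * exp \<bar>\<alpha>\<bar> * exp (\<bar>\<alpha>\<bar> * \<bar>t\<bar>)" if "-(1/2) \<le> t" for t
      using amp_H5[where Am = A1 and xc = 1 and \<alpha> = \<alpha> and t = t] that unfolding \<phi>1_def by simp
  qed (use M\<alpha>0 in \<open>auto simp: power2_eq_square\<close>)
  then obtain C1 where C1: "\<And>n. n \<ge> 1 \<Longrightarrow> integrable lborel (\<lambda>t. indicator {-(1/2)..} t * (\<phi>1 t * exp (n * g1 t))) \<and>
     \<bar>(\<integral>t. indicator {-(1/2)..} t * (\<phi>1 t * exp (n * g1 t)) \<partial>lborel) - A1 * sqrt (pi / (5/9 * n))\<bar>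
       \<le> C1 * (1 / (n * sqrt n) + exp (- ((n - 1) * (1/3 * (1/10)\<^sup>2))) + exp (- ((n - 1) * (5/9 * (1/10)\<^sup>2))))"
    by blast
  show "(\<lambda>n. Xint p_const c_const \<alpha> n /
            (3 * sqrt (pi / 5) / 2 powr (\<alpha> / 2 + 1 / 2) *
             ((3 / 2) powr n / (exp (n / 6) * sqrt n))) - 1)
           \<in> O[at_top](\<lambda>n. 1 / n)"
  proof (rule final_generic[where Fz = "ln (3/2) - 1/6" and A = A1 and a = "5/9" and C = C1
        and ea = "1/3 * (1/10)\<^sup>2" and eb = "5/9 * (1/10)\<^sup>2"
        and J = "\<lambda>n. \<integral>t. indicator {-(1/2)..} t * (\<phi>1 t * exp (n * g1 t)) \<partial>lborel"])
    fix n :: real assume n: "n \<ge> 1"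
    show "Xint p_const c_const \<alpha> n = exp (n * (ln (3/2) - 1/6)) * (\<integral>t. indicator {-(1/2)..} t * (\<phi>1 t * exp (n * g1 t)) \<partial>lborel)"
      unfolding \<phi>1_def A1_def
    proof (rule xint_transfer[where xc = 1])
      show "p_const > 0" by (simp add: p_const_def)
      show "1/2 = 1 - sqrt 2 * p_const" by (simp add: p_const_def)
      show "ln (1 + (1 + t)\<^sup>2 / 2) - (1 + t - sqrt 2 * p_const)\<^sup>2 / (2 * c_const) = (ln (3/2) - 1/6) + g1 t"
        if "-(1/2) \<le> t" for t
        unfolding g1_def by (rule case1_eq[OF that])
      show "integrable lborel (\<lambda>t. indicator {-(1/2)..} t * (1 powr \<alpha> / 2 powr (\<alpha> / 2) / sqrt 2 * (1 + t / 1) powr \<alpha> * exp (n * g1 t)))"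
        using C1[OF n] unfolding \<phi>1_def A1_def by simp
    qed simp
    show "\<bar>(\<integral>t. indicator {-(1/2)..} t * (\<phi>1 t * exp (n * g1 t)) \<partial>lborel) - A1 * sqrt (pi / (5/9 * n))\<bar>
       \<le> C1 * (1 / (n * sqrt n) + exp (- ((n - 1) * (1/3 * (1/10)\<^sup>2))) + exp (- ((n - 1) * (5/9 * (1/10)\<^sup>2))))"
      using C1[OF n] by simp
    have sq: "sqrt (pi / (5/9 * n)) = 3 * sqrt (pi / 5) / sqrt n"
    proof -
      have "pi / (5/9 * n) = 3\<^sup>2 * (pi / 5) / n" by (simp add: field_simps)
      then show ?thesis by (simp add: real_sqrt_mult real_sqrt_divide)
    qed
    have ex: "exp (n * (ln (3/2) - 1/6)) = (3/2) powr n / exp (n / 6)"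
      by (simp add: powr_def right_diff_distrib exp_diff mult.commute)
    show "3 * sqrt (pi / 5) / 2 powr (\<alpha> / 2 + 1 / 2) * ((3 / 2) powr n / (exp (n / 6) * sqrt n))
        = exp (n * (ln (3/2) - 1/6)) * (A1 * sqrt (pi / (5/9 * n)))"
      unfolding sq ex s2pow A1_def by (simp add: field_simps)
  qed (use A1p in auto)
  define A2 where "A2 = 2 powr \<alpha> / 2 powr (\<alpha> / 2) / sqrt 2"
  define \<phi>2 where "\<phi>2 = (\<lambda>t::real. A2 * (1 + t / 2) powr \<alpha>)"
  define g2 where "g2 = (\<lambda>t::real. ln (1 + (4 * t + t\<^sup>2) / 6) - (2 * t + t\<^sup>2) / 3)"
  have A2p: "A2 > 0" by (simp add: A2_def)
  have L2: "\<exists>C. \<forall>n\<ge>1. integrable lborel (\<lambda>t. indicator {-1..} t * (\<phi>2 t * exp (n * g2 t))) \<and>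
     \<bar>(\<integral>t. indicator {-1..} t * (\<phi>2 t * exp (n * g2 t)) \<partial>lborel) - A2 * sqrt (pi / (7/18 * n))\<bar>
       \<le> C * (1 / (n * sqrt n) + exp (- ((n - 1) * (1/6 * (1/10)\<^sup>2))) + exp (- ((n - 1) * (7/18 * (1/10)\<^sup>2))))"
  proof (rule laplace_general[where b = "-1/81" and c = "A2 * \<alpha> / 2" and M = 3 and Mv = "\<bar>A2\<bar> * M\<alpha>"
        and K = "\<bar>A2\<bar> * exp \<bar>\<alpha>\<bar>" and \<beta> = "\<bar>\<alpha>\<bar>"])
    show "\<phi>2 \<in> borel_measurable lborel" unfolding \<phi>2_def by measurable
    show "g2 \<in> borel_measurable lborel" unfolding g2_def by measurable
    show "\<And>t. \<bar>t\<bar> \<le> 1/10 \<Longrightarrow> \<bar>g2 t + 7/18 * t\<^sup>2 - (-1/81) * t^3\<bar> \<le> 3 * t^4"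
      unfolding g2_def by (rule case2_H1)
    show "g2 t \<le> - (1/6 * t\<^sup>2)" if "-1 \<le> t" for t
      unfolding g2_def by (rule case2_H4[OF that])
    show "\<bar>\<phi>2 t - A2 - A2 * \<alpha> / 2 * t\<bar> \<le> \<bar>A2\<bar> * M\<alpha> * t\<^sup>2" if "\<bar>t\<bar> \<le> 1/10" for t
    proof -
      have "\<bar>t\<bar> \<le> 1/2" using that by simp
      from amp_H2[where Am = A2 and xc = 2 and \<alpha> = \<alpha> and t = t, OF _ this]
      show ?thesis unfolding \<phi>2_def M\<alpha>_def by simp
    qed
    show "\<bar>\<phi>2 t\<bar> \<le> \<bar>A2\<bar> * exp \<bar>\<alpha>\<bar> * exp (\<bar>\<alpha>\<bar> * \<bar>t\<bar>)" if "-1 \<le> t" for t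
      using amp_H5[where Am = A2 and xc = 2 and \<alpha> = \<alpha> and t = t] that unfolding \<phi>2_def by simp
  qed (use M\<alpha>0 in \<open>auto simp: power2_eq_square\<close>)
  then obtain C2 where C2: "\<And>n. n \<ge> 1 \<Longrightarrow> integrable lborel (\<lambda>t. indicator {-1..} t * (\<phi>2 t * exp (n * g2 t))) \<and>
     \<bar>(\<integral>t. indicator {-1..} t * (\<phi>2 t * exp (n * g2 t)) \<partial>lborel) - A2 * sqrt (pi / (7/18 * n))\<bar>
       \<le> C2 * (1 / (n * sqrt n) + exp (- ((n - 1) * (1/6 * (1/10)\<^sup>2))) + exp (- ((n - 1) * (7/18 * (1/10)\<^sup>2))))"
    by blast
  show "(\<lambda>n. Xint (2 * p_const) (2 * c_const) \<alpha> n /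
            (3 * sqrt (pi / 7) * 2 powr (\<alpha> / 2) *
             (3 powr n / (exp (n / 3) * sqrt n))) - 1)
           \<in> O[at_top](\<lambda>n. 1 / n)"
  proof (rule final_generic[where Fz = "ln 3 - 1/3" and A = A2 and a = "7/18" and C = C2
        and ea = "1/6 * (1/10)\<^sup>2" and eb = "7/18 * (1/10)\<^sup>2"
        and J = "\<lambda>n. \<integral>t. indicator {-1..} t * (\<phi>2 t * exp (n * g2 t)) \<partial>lborel"])
    fix n :: real assume n: "n \<ge> 1"
    show "Xint (2 * p_const) (2 * c_const) \<alpha> n = exp (n * (ln 3 - 1/3)) * (\<integral>t. indicator {-1..} t * (\<phi>2 t * exp (n * g2 t)) \<partial>lborel)"
      unfolding \<phi>2_def A2_def
    proof (rule xint_transfer[where xc = 2])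
      show "2 * p_const > 0" by (simp add: p_const_def)
      show "1 = 2 - sqrt 2 * (2 * p_const)" by (simp add: p_const_def)
      show "ln (1 + (2 + t)\<^sup>2 / 2) - (2 + t - sqrt 2 * (2 * p_const))\<^sup>2 / (2 * (2 * c_const)) = (ln 3 - 1/3) + g2 t"
        if "-1 \<le> t" for t
        unfolding g2_def by (rule case2_eq[OF that])
      show "integrable lborel (\<lambda>t. indicator {-1..} t * (2 powr \<alpha> / 2 powr (\<alpha> / 2) / sqrt 2 * (1 + t / 2) powr \<alpha> * exp (n * g2 t)))"
        using C2[OF n] unfolding \<phi>2_def A2_def by simp
    qed simp
    show "\<bar>(\<integral>t. indicator {-1..} t * (\<phi>2 t * exp (n * g2 t)) \<partial>lborel) - A2 * sqrt (pi / (7/18 * n))\<bar>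
       \<le> C2 * (1 / (n * sqrt n) + exp (- ((n - 1) * (1/6 * (1/10)\<^sup>2))) + exp (- ((n - 1) * (7/18 * (1/10)\<^sup>2))))"
      using C2[OF n] by simp
    have sq: "sqrt (pi / (7/18 * n)) = 3 * sqrt 2 * sqrt (pi / 7) / sqrt n"
    proof -
      have "pi / (7/18 * n) = 3\<^sup>2 * 2 * (pi / 7) / n" by (simp add: field_simps)
      moreover have s18: "sqrt 18 = 3 * sqrt 2" using real_sqrt_mult[of "3\<^sup>2" 2] by simp
      ultimately show ?thesis by (simp add: real_sqrt_mult real_sqrt_divide)
    qed
    have ex: "exp (n * (ln 3 - 1/3)) = 3 powr n / exp (n / 3)"
      by (simp add: powr_def right_diff_distrib exp_diff mult.commute)
    have a2: "2 powr \<alpha> / 2 powr (\<alpha> / 2) = 2 powr (\<alpha> / 2)"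
      by (simp add: powr_diff[symmetric])
    show "3 * sqrt (pi / 7) * 2 powr (\<alpha> / 2) * (3 powr n / (exp (n / 3) * sqrt n))
        = exp (n * (ln 3 - 1/3)) * (A2 * sqrt (pi / (7/18 * n)))"
      unfolding sq ex A2_def a2 by (simp add: field_simps)
  qed (use A2p in auto)
qed

end
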